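(* Let $A,B\in\mathcal{M}_n$ and let $\psi\colon H^*(M(A);\mathbb{Q})\to H^*(M(B);\mathbb{Q})$ be a graded ring isomorphism. Then there exist nonzero rational numbers $q_1,\dots,q_n$ and a permutation $\sigma$ of $\{1,\dots,n\}$ such that $\psi(y^A_j)=q_j\,y^B_{\sigma(j)}$ for $j=1,\dots,n$.
   Context: Let $\mathcal{M}_n$ be the set of integral strictly upper triangular $n\times n$ matrices $A=(A^i_j)$ ($A^i_j$ is the $(i,j)$ entry, and $A^i_j=0$ for $i\ge j$). For $A\in\mathcal{M}_n$, $M(A)$ denotes the Bott manifold obtained as the quotient of $(S^3)^n$ ($S^3\subset\mathbb{C}^2$ the unit sphere) by the free $(S^1)^n$-action $(g_1,\dots,g_n)\cdot((z_1,w_1),\dots,(z_n,w_n))=\big(((\prod_{k<j}g_k^{-A^k_j})g_jz_j,\ g_jw_j)\big)_{j=1}^n$. Let $x^A_j\in H^2(M(A);\mathbb{Z})$ be the first Chern class of the line bundle obtained as the quotient of $(S^3)^n\times\mathbb{C}$ where $g$ acts on the $\mathbb{C}$-factor by $g_j^{-1}$. Put $\alpha^A_j=\sum_{i<j}A^i_jx^A_i$. Then $H^*(M(A);\mathbb{Z})=\mathbb{Z}[x^A_1,\dots,x^A_n]/((x^A_j)^2-\alpha^A_jx^A_j\mid j=1,\dots,n)$. Define $y^A_j=x^A_j-\tfrac12\alpha^A_j\in H^2(M(A);\mathbb{Q})$. The same notation is used for $B$. *)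

theory Defs
  imports Complex_Main "HOL-Library.Poly_Mapping" "HOL-Algebra.QuotRing" "HOL-Combinatorics.Permutations"
begin

(* Multivariate polynomials over Q: monomials are finitely supported
   exponent vectors nat \<Rightarrow>\<^sub>0 nat (variable x_i has index i, i = 1..n). *)
type_synonym mpoly = "(nat \<Rightarrow>\<^sub>0 nat) \<Rightarrow>\<^sub>0 rat"

definition Var :: "nat \<Rightarrow> mpoly" where
  "Var i = Poly_Mapping.single (Poly_Mapping.single i 1) 1"

definition Const :: "rat \<Rightarrow> mpoly" where
  "Const c = Poly_Mapping.single 0 c"

definition polys_in :: "nat \<Rightarrow> mpoly set" where
  "polys_in n = {p. \<forall>m \<in> Poly_Mapping.keys p. Poly_Mapping.keys m \<subseteq> {1..n}}"

(* homogeneous polynomials of polynomial degree d (cohomological degree 2d) *)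
definition homog :: "nat \<Rightarrow> mpoly set" where
  "homog d = {p. \<forall>m \<in> Poly_Mapping.keys p. (\<Sum>i\<in>Poly_Mapping.keys m. Poly_Mapping.lookup m i) = d}"

definition poly_ring :: "nat \<Rightarrow> mpoly ring" where
  "poly_ring n = \<lparr>carrier = polys_in n, monoid.mult = (*), one = 1, zero = 0, add = (+)\<rparr>"

definition bott_matrix :: "nat \<Rightarrow> (nat \<Rightarrow> nat \<Rightarrow> int) \<Rightarrow> bool" where
  "bott_matrix n A \<longleftrightarrow> (\<forall>i\<in>{1..n}. \<forall>j\<in>{1..n}. j \<le> i \<longrightarrow> A i j = 0)"

definition alpha :: "(nat \<Rightarrow> nat \<Rightarrow> int) \<Rightarrow> nat \<Rightarrow> mpoly" where
  "alpha A j = (\<Sum>i\<in>{1..<j}. Const (of_int (A i j)) * Var i)"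

definition bott_rels :: "nat \<Rightarrow> (nat \<Rightarrow> nat \<Rightarrow> int) \<Rightarrow> mpoly set" where
  "bott_rels n A = {Var j * Var j - alpha A j * Var j | j. j \<in> {1..n}}"

definition bott_ideal :: "nat \<Rightarrow> (nat \<Rightarrow> nat \<Rightarrow> int) \<Rightarrow> mpoly set" where
  "bott_ideal n A = genideal (poly_ring n) (bott_rels n A)"

(* H^*(M(A);Q) = Q[x_1..x_n]/(x_j^2 - alpha_j x_j) *)
definition coh :: "nat \<Rightarrow> (nat \<Rightarrow> nat \<Rightarrow> int) \<Rightarrow> mpoly set ring" where
  "coh n A = poly_ring n Quot bott_ideal n A"

definition cls :: "nat \<Rightarrow> (nat \<Rightarrow> nat \<Rightarrow> int) \<Rightarrow> mpoly \<Rightarrow> mpoly set" where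
  "cls n A p = bott_ideal n A +>\<^bsub>poly_ring n\<^esub> p"

(* the degree-2d part H^{2d}(M(A);Q) (odd degrees vanish) *)
definition coh_deg :: "nat \<Rightarrow> (nat \<Rightarrow> nat \<Rightarrow> int) \<Rightarrow> nat \<Rightarrow> mpoly set set" where
  "coh_deg n A d = {cls n A p | p. p \<in> polys_in n \<inter> homog d}"

definition ypoly :: "(nat \<Rightarrow> nat \<Rightarrow> int) \<Rightarrow> nat \<Rightarrow> mpoly" where
  "ypoly A j = Var j - Const (1/2) * alpha A j"

definition ycls :: "nat \<Rightarrow> (nat \<Rightarrow> nat \<Rightarrow> int) \<Rightarrow> nat \<Rightarrow> mpoly set" where
  "ycls n A j = cls n A (ypoly A j)"

definition graded_ring_iso ::
  "nat \<Rightarrow> (nat \<Rightarrow> nat \<Rightarrow> int) \<Rightarrow> (nat \<Rightarrow> nat \<Rightarrow> int) \<Rightarrow> (mpoly set \<Rightarrow> mpoly set) \<Rightarrow> bool" where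
  "graded_ring_iso n A B \<psi> \<longleftrightarrow>
     \<psi> \<in> ring_iso (coh n A) (coh n B) \<and> (\<forall>d. \<psi> ` coh_deg n A d \<subseteq> coh_deg n B d)"

end

theory Submission
  imports Defs
begin


definition Gf :: "(nat \<Rightarrow> nat \<Rightarrow> rat) \<Rightarrow> nat \<Rightarrow> nat \<Rightarrow> rat" where
  "Gf g j a = (if a < j then g j a else 0)"

definition Em :: "(nat \<Rightarrow> nat \<Rightarrow> rat) \<Rightarrow> nat \<Rightarrow> nat \<Rightarrow> nat \<Rightarrow> rat" where
  "Em g j a b = (if a = j \<and> b = j then 1 else 0) - Gf g j a * Gf g j b"

definition inspan :: "nat set \<Rightarrow> (nat \<Rightarrow> nat \<Rightarrow> rat) \<Rightarrow> (nat \<Rightarrow> nat \<Rightarrow> rat) \<Rightarrow> bool" where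
  "inspan I g S \<longleftrightarrow> (\<exists>c. \<forall>a\<in>I. \<forall>b\<in>I. S a b = (\<Sum>j\<in>I. c j * Em g j a b))"

definition cnjM :: "nat set \<Rightarrow> (nat \<Rightarrow> nat \<Rightarrow> rat) \<Rightarrow> (nat \<Rightarrow> nat \<Rightarrow> rat) \<Rightarrow> nat \<Rightarrow> nat \<Rightarrow> rat" where
  "cnjM I M S a b = (\<Sum>i\<in>I. \<Sum>l\<in>I. M a i * S i l * M b l)"

definition injM :: "nat set \<Rightarrow> nat set \<Rightarrow> (nat \<Rightarrow> nat \<Rightarrow> rat) \<Rightarrow> bool" where
  "injM I I' M \<longleftrightarrow> (\<forall>v. (\<forall>a\<in>I'. (\<Sum>i\<in>I. M a i * v i) = 0) \<longrightarrow> (\<forall>i\<in>I. v i = 0))"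

lemma injMD:
  assumes "injM I I' M" "\<And>a. a \<in> I' \<Longrightarrow> (\<Sum>i\<in>I. M a i * v i) = 0" "i \<in> I"
  shows "v i = 0"
  using assms unfolding injM_def by blast

definition hyp where
  "hyp I g I' g' M \<longleftrightarrow> (\<forall>j\<in>I. inspan I' g' (cnjM I M (Em g j))) \<and> injM I I' M"

lemma top_sum:
  assumes "finite I" "\<forall>j\<in>I. c j \<noteq> 0 \<longrightarrow> j \<le> b"
  shows "(\<Sum>j\<in>I. c j * Em g j a b) = (if a = b \<and> b \<in> I then c b else 0)"
proof -
  have "(\<Sum>j\<in>I. c j * Em g j a b) = (\<Sum>j\<in>I. if j = b then (if a = b then c b else 0) else 0)"
  proof (rule sum.cong)
    fix j assume j: "j \<in> I"
    show "c j * Em g j a b = (if j = b then (if a = b then c b else 0) else 0)"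
    proof (cases "c j = 0")
      case True thus ?thesis by (auto simp: Em_def Gf_def)
    next
      case False
      hence "j \<le> b" using assms j by auto
      hence "Gf g j b = 0" by (simp add: Gf_def)
      thus ?thesis by (auto simp: Em_def)
    qed
  qed simp
  also have "\<dots> = (if a = b \<and> b \<in> I then c b else 0)"
    using assms(1) by (simp add: sum.delta)
  finally show ?thesis .
qed

lemma inspan_cong:
  assumes "inspan I g S" "\<And>a b. a \<in> I \<Longrightarrow> b \<in> I \<Longrightarrow> S a b = S' a b"
  shows "inspan I g S'"
  using assms unfolding inspan_def by metis

lemma inspan_zero: "inspan I g (\<lambda>a b. 0)"
  unfolding inspan_def by (rule exI[of _ "\<lambda>j. 0"]) simp

lemma inspan_add:
  assumes "inspan I g S" "inspan I g S'"
  shows "inspan I g (\<lambda>a b. S a b + S' a b)"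
proof -
  obtain c where c: "\<forall>a\<in>I. \<forall>b\<in>I. S a b = (\<Sum>j\<in>I. c j * Em g j a b)" using assms(1) inspan_def by auto
  obtain d where d: "\<forall>a\<in>I. \<forall>b\<in>I. S' a b = (\<Sum>j\<in>I. d j * Em g j a b)" using assms(2) inspan_def by auto
  show ?thesis unfolding inspan_def
    by (rule exI[of _ "\<lambda>j. c j + d j"]) (simp add: c d distrib_right sum.distrib)
qed

lemma inspan_smult:
  assumes "inspan I g S"
  shows "inspan I g (\<lambda>a b. r * S a b)"
proof -
  obtain c where c: "\<forall>a\<in>I. \<forall>b\<in>I. S a b = (\<Sum>j\<in>I. c j * Em g j a b)" using assms(1) inspan_def by auto
  show ?thesis unfolding inspan_def
    by (rule exI[of _ "\<lambda>j. r * c j"]) (simp add: c sum_distrib_left mult.assoc)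
qed

lemma inspan_sum:
  assumes "finite J" "\<And>x. x \<in> J \<Longrightarrow> inspan I g (f x)"
  shows "inspan I g (\<lambda>a b. \<Sum>x\<in>J. f x a b)"
  using assms
proof (induction J rule: finite_induct)
  case empty thus ?case by (simp add: inspan_zero)
next
  case (insert x F)
  have "inspan I g (\<lambda>a b. f x a b + (\<Sum>x\<in>F. f x a b))"
    by (rule inspan_add) (use insert in auto)
  thus ?case using insert by simp
qed

lemma inspan_Em: assumes "j \<in> I" "finite I" shows "inspan I g (Em g j)"
proof -
  have "(\<Sum>i\<in>I. (if i = j then 1 else 0) * Em g i a b) = Em g j a b" for a b
  proof -
    have "(\<Sum>i\<in>I. (if i = j then 1 else 0) * Em g i a b) = (\<Sum>i\<in>I. if i = j then Em g i a b else 0)"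
      by (rule sum.cong) auto
    thus ?thesis using assms by (simp add: sum.delta)
  qed
  thus ?thesis unfolding inspan_def by (intro exI[of _ "\<lambda>i. if i = j then 1 else 0"]) simp
qed

lemma cnj_cong:
  assumes "\<And>i l. i \<in> I \<Longrightarrow> l \<in> I \<Longrightarrow> S i l = S' i l"
  shows "cnjM I M S a b = cnjM I M S' a b"
  unfolding cnjM_def using assms by (auto intro!: sum.cong)

lemma cnj_lin:
  "cnjM I M (\<lambda>a b. \<Sum>j\<in>J. c j * X j a b) a b = (\<Sum>j\<in>J. c j * cnjM I M (X j) a b)"
  unfolding cnjM_def
  by (simp add: sum_distrib_left sum_distrib_right mult.assoc mult.left_commute sum.swap[of _ J])

lemma hyp_span:
  assumes "finite I" "finite I'" "\<forall>j\<in>I. inspan I' g' (cnjM I M (Em g j))" "inspan I g S"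
  shows "inspan I' g' (cnjM I M S)"
proof -
  obtain c where c: "\<forall>a\<in>I. \<forall>b\<in>I. S a b = (\<Sum>j\<in>I. c j * Em g j a b)" using assms(4) inspan_def by auto
  have h1: "inspan I' g' (\<lambda>a b. \<Sum>j\<in>I. c j * cnjM I M (Em g j) a b)"
    by (rule inspan_sum) (use assms in \<open>auto intro: inspan_smult\<close>)
  have h2: "cnjM I M S a b = (\<Sum>j\<in>I. c j * cnjM I M (Em g j) a b)" for a b
    using cnj_cong[of I S "\<lambda>a b. \<Sum>j\<in>I. c j * Em g j a b" M a b] c cnj_lin by simp
  show ?thesis by (rule inspan_cong[OF h1]) (simp add: h2)
qed

lemma sqzero_support:
  assumes fin: "finite I" and sp: "inspan I g (\<lambda>a b. z a * z b)" and m: "m \<in> I" "z m \<noteq> 0"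
  shows "\<exists>k\<in>I. z k \<noteq> 0 \<and> (\<forall>a\<in>I. a \<noteq> k \<longrightarrow> z a = 0)"
proof -
  obtain c where c: "\<forall>a\<in>I. \<forall>b\<in>I. z a * z b = (\<Sum>j\<in>I. c j * Em g j a b)"
    using sp inspan_def by auto
  define Z where "Z = {a\<in>I. z a \<noteq> 0}"
  have Zfin: "finite Z" "Z \<noteq> {}" using fin m by (auto simp: Z_def)
  define m0 where "m0 = Max Z"
  have m0: "m0 \<in> I" "z m0 \<noteq> 0" using Max_in[OF Zfin] by (auto simp: m0_def Z_def)
  have m0max: "a \<in> I \<Longrightarrow> z a \<noteq> 0 \<Longrightarrow> a \<le> m0" for a
    using Max_ge[OF Zfin(1)] by (auto simp: m0_def Z_def)
  define C where "C = {j\<in>I. c j \<noteq> 0}"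
  have Cfin: "finite C" using fin by (simp add: C_def)
  have Cne: "C \<noteq> {}"
  proof
    assume "C = {}"
    hence "\<forall>j\<in>I. c j = 0" by (auto simp: C_def)
    hence "z m0 * z m0 = 0" using c m0 by simp
    thus False using m0 by simp
  qed
  define J where "J = Max C"
  have J: "J \<in> I" "c J \<noteq> 0" using Max_in[OF Cfin Cne] by (auto simp: J_def C_def)
  have Jmax: "\<forall>j\<in>I. c j \<noteq> 0 \<longrightarrow> j \<le> J"
    using Max_ge[OF Cfin] by (auto simp: J_def C_def)
  have "z J * z J = c J" using c J top_sum[OF fin Jmax, of g J] by simp
  hence "z J \<noteq> 0" using J by auto
  hence "J \<le> m0" using m0max J by auto
  hence cm0: "\<forall>j\<in>I. c j \<noteq> 0 \<longrightarrow> j \<le> m0" using Jmax by auto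
  have "\<forall>a\<in>I. a \<noteq> m0 \<longrightarrow> z a = 0"
  proof (intro ballI impI)
    fix a assume a: "a \<in> I" "a \<noteq> m0"
    have "z a * z m0 = 0" using c a m0 top_sum[OF fin cm0, of g a] by simp
    thus "z a = 0" using m0 by simp
  qed
  thus ?thesis using m0 by blast
qed

lemma quot_span:
  assumes fin: "finite I" and k: "k \<in> I"
    and sq: "inspan I g (\<lambda>a b. if a = k \<and> b = k then 1 else 0)"
    and S: "inspan I g S"
  shows "inspan (I - {k}) g S"
proof -
  obtain d where d: "\<forall>a\<in>I. \<forall>b\<in>I. (if a = k \<and> b = k then 1 else 0) = (\<Sum>j\<in>I. d j * Em g j a b)"
    using sq inspan_def by auto
  obtain c where c: "\<forall>a\<in>I. \<forall>b\<in>I. S a b = (\<Sum>j\<in>I. c j * Em g j a b)"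
    using S inspan_def by auto
  define C where "C = {j\<in>I. d j \<noteq> 0}"
  have Cfin: "finite C" using fin by (simp add: C_def)
  have Cne: "C \<noteq> {}"
  proof
    assume "C = {}"
    hence "\<forall>j\<in>I. d j = 0" by (auto simp: C_def)
    thus False using d k by (metis (no_types, lifting) mult_zero_left sum.neutral zero_neq_one)
  qed
  define J where "J = Max C"
  have J: "J \<in> I" "d J \<noteq> 0" using Max_in[OF Cfin Cne] by (auto simp: J_def C_def)
  have Jmax: "\<forall>j\<in>I. d j \<noteq> 0 \<longrightarrow> j \<le> J"
    using Max_ge[OF Cfin] by (auto simp: J_def C_def)
  have "(if J = k \<and> J = k then 1 else 0) = (\<Sum>j\<in>I. d j * Em g j J J)" using d J by blast
  hence "(if J = k then 1 else 0) = d J" using J top_sum[OF fin Jmax, of g J] by simp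
  hence Jk: "J = k" using J by (auto split: if_splits)
  have "(if k = k \<and> k = k then 1 else 0) = (\<Sum>j\<in>I. d j * Em g j k k)" using d k by blast
  hence dk: "d k = 1" using k top_sum[OF fin Jmax, of g k] Jk by simp
  have Ek: "Em g k a b = - (\<Sum>j\<in>I-{k}. d j * Em g j a b)" if ab: "a \<in> I - {k}" "b \<in> I - {k}" for a b
  proof -
    have "0 = (\<Sum>j\<in>I. d j * Em g j a b)" using d ab by auto
    also have "\<dots> = d k * Em g k a b + (\<Sum>j\<in>I-{k}. d j * Em g j a b)"
      using fin k by (simp add: sum.remove)
    finally show ?thesis using dk by simp
  qed
  show ?thesis unfolding inspan_def
  proof (intro exI[of _ "\<lambda>j. c j - c k * d j"] ballI)
    fix a b assume ab: "a \<in> I - {k}" "b \<in> I - {k}"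
    have "S a b = (\<Sum>j\<in>I. c j * Em g j a b)" using c ab by auto
    also have "\<dots> = c k * Em g k a b + (\<Sum>j\<in>I-{k}. c j * Em g j a b)"
      using fin k by (simp add: sum.remove)
    also have "\<dots> = (\<Sum>j\<in>I-{k}. (c j - c k * d j) * Em g j a b)"
      using Ek[OF ab] by (simp add: sum_distrib_left left_diff_distrib sum_subtractf mult.assoc)
    finally show "S a b = (\<Sum>j\<in>I-{k}. (c j - c k * d j) * Em g j a b)" .
  qed
qed

definition dsq :: "nat \<Rightarrow> nat \<Rightarrow> nat \<Rightarrow> rat" where
  "dsq k a b = (if a = k \<and> b = k then 1 else 0)"

lemma hyp_quot:
  assumes fin: "finite I" "finite I'" and h: "hyp I g I' g' M"
    and j: "j \<in> I" and k: "k \<in> I'" and Mkj: "M k j \<noteq> 0"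
    and Mcol: "\<forall>b\<in>I'. b \<noteq> k \<longrightarrow> M b j = 0"
    and sqk: "inspan I' g' (dsq k)"
  shows "hyp (I - {j}) g (I' - {k}) g' M"
proof -
  have sp: "\<forall>j\<in>I. inspan I' g' (cnjM I M (Em g j))" and inj: "injM I I' M"
    using h hyp_def by auto
  have eqc: "cnjM (I - {j}) M X a b = cnjM I M X a b" if ab: "a \<in> I' - {k}" "b \<in> I' - {k}" for X a b
  proof -
    have Ma: "M a j = 0" "M b j = 0" using Mcol ab by auto
    have "cnjM I M X a b = (\<Sum>i\<in>I. \<Sum>l\<in>I. M a i * X i l * M b l)" by (simp add: cnjM_def)
    also have "\<dots> = (\<Sum>i\<in>I-{j}. \<Sum>l\<in>I. M a i * X i l * M b l)"
      by (subst sum.remove[OF fin(1) j]) (simp add: Ma)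
    also have "\<dots> = (\<Sum>i\<in>I-{j}. \<Sum>l\<in>I-{j}. M a i * X i l * M b l)"
      by (rule sum.cong[OF refl], subst sum.remove[OF fin(1) j]) (simp add: Ma)
    finally show ?thesis by (simp add: cnjM_def)
  qed
  have sp': "\<forall>j'\<in>I-{j}. inspan (I' - {k}) g' (cnjM (I-{j}) M (Em g j'))"
  proof
    fix j' assume j': "j' \<in> I - {j}"
    have "inspan (I' - {k}) g' (cnjM I M (Em g j'))"
      using quot_span[OF fin(2) k sqk[unfolded dsq_def]] sp j' by auto
    thus "inspan (I' - {k}) g' (cnjM (I-{j}) M (Em g j'))"
      by (rule inspan_cong) (simp add: eqc)
  qed
  have inj': "injM (I - {j}) (I' - {k}) M"
    unfolding injM_def
  proof (intro allI impI)
    fix v assume v: "\<forall>a\<in>I' - {k}. (\<Sum>i\<in>I - {j}. M a i * v i) = 0"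
    define v' where "v' = v(j := - (\<Sum>i\<in>I - {j}. M k i * v i) / M k j)"
    have "\<forall>a\<in>I'. (\<Sum>i\<in>I. M a i * v' i) = 0"
    proof
      fix a assume a: "a \<in> I'"
      have "(\<Sum>i\<in>I. M a i * v' i) = M a j * v' j + (\<Sum>i\<in>I-{j}. M a i * v' i)"
        using fin j by (simp add: sum.remove)
      also have "(\<Sum>i\<in>I-{j}. M a i * v' i) = (\<Sum>i\<in>I-{j}. M a i * v i)"
        by (rule sum.cong) (auto simp: v'_def)
      finally have eq: "(\<Sum>i\<in>I. M a i * v' i) = M a j * v' j + (\<Sum>i\<in>I-{j}. M a i * v i)" .
      show "(\<Sum>i\<in>I. M a i * v' i) = 0"
      proof (cases "a = k")
        case True thus ?thesis using eq Mkj by (simp add: v'_def)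
      next
        case False thus ?thesis using eq Mcol v a by auto
      qed
    qed
    hence "\<forall>i\<in>I. v' i = 0" using inj injM_def by blast
    thus "\<forall>i\<in>I - {j}. v i = 0"
    proof (intro ballI)
      fix i assume "\<forall>i\<in>I. v' i = 0" "i \<in> I - {j}"
      thus "v i = 0" unfolding v'_def by (metis DiffD1 DiffD2 fun_upd_other singletonI)
    qed
  qed
  show ?thesis using sp' inj' hyp_def by blast
qed

lemma sq_transfer:
  assumes fin: "finite I" "finite I'" and h: "hyp I g I' g' M"
    and j: "j \<in> I" and sqj: "inspan I g (dsq j)"
  shows "\<exists>k\<in>I'. M k j \<noteq> 0 \<and> (\<forall>b\<in>I'. b \<noteq> k \<longrightarrow> M b j = 0) \<and> inspan I' g' (dsq k)"
proof -
  have sp: "\<forall>j\<in>I. inspan I' g' (cnjM I M (Em g j))" and inj: "injM I I' M"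
    using h hyp_def by auto
  have "inspan I' g' (cnjM I M (dsq j))" by (rule hyp_span[OF fin sp sqj])
  moreover have "cnjM I M (dsq j) a b = M a j * M b j" for a b
  proof -
    have "cnjM I M (dsq j) a b = (\<Sum>i\<in>I. if i = j then M a i * M b j else 0)"
      unfolding cnjM_def
    proof (rule sum.cong[OF refl])
      fix i assume "i \<in> I"
      have "(\<Sum>l\<in>I. M a i * dsq j i l * M b l) = (\<Sum>l\<in>I. if l = j then (if i = j then M a i * M b l else 0) else 0)"
        by (rule sum.cong) (auto simp: dsq_def)
      also have "\<dots> = (if i = j then M a i * M b j else 0)" using fin j by (simp add: sum.delta)
      finally show "(\<Sum>l\<in>I. M a i * dsq j i l * M b l) = (if i = j then M a i * M b j else 0)" .
    qed
    thus ?thesis using fin j by (simp add: sum.delta)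
  qed
  ultimately have zz: "inspan I' g' (\<lambda>a b. M a j * M b j)" by (rule inspan_cong)
  have "\<exists>m\<in>I'. M m j \<noteq> 0"
  proof (rule ccontr)
    assume "\<not> (\<exists>m\<in>I'. M m j \<noteq> 0)"
    moreover have "(\<Sum>i\<in>I. M a i * (if i = j then 1 else 0)) = M a j" for a
    proof -
      have "(\<Sum>i\<in>I. M a i * (if i = j then 1 else 0)) = (\<Sum>i\<in>I. if i = j then M a i else 0)"
        by (rule sum.cong) auto
      thus ?thesis using fin j by (simp add: sum.delta)
    qed
    ultimately have "\<And>a. a \<in> I' \<Longrightarrow> (\<Sum>i\<in>I. M a i * (if i = j then 1 else 0)) = 0" by simp
    from injMD[OF inj this j] show False by simp
  qed
  then obtain m where m: "m \<in> I'" "M m j \<noteq> 0" by blast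
  obtain k where k: "k \<in> I'" "M k j \<noteq> 0" "\<forall>a\<in>I'. a \<noteq> k \<longrightarrow> M a j = 0"
    using sqzero_support[OF fin(2) zz m] by blast
  have "inspan I' g' (\<lambda>a b. (1 / (M k j * M k j)) * (M a j * M b j))" by (rule inspan_smult[OF zz])
  hence "inspan I' g' (dsq k)"
  proof (rule inspan_cong)
    fix a b assume "a \<in> I'" "b \<in> I'"
    thus "1 / (M k j * M k j) * (M a j * M b j) = dsq k a b" using k unfolding dsq_def by (cases "a = k"; cases "b = k") auto
  qed
  thus ?thesis using k by blast
qed

lemma sq_min1:
  assumes fin: "finite I" and i1: "i1 \<in> I" and mn: "\<forall>a\<in>I. i1 \<le> a"
  shows "inspan I g (dsq i1)"
proof -
  have *: "Em g i1 a b = dsq i1 a b" if "a \<in> I" "b \<in> I" for a b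
    using mn that by (auto simp: Em_def Gf_def dsq_def)
  show ?thesis by (rule inspan_cong[OF inspan_Em[OF i1 fin]]) (simp add: *)
qed

lemma sq_min2:
  assumes fin: "finite I" and i1: "i1 \<in> I" and i2: "i2 \<in> I" and ne: "i1 \<noteq> i2"
    and mn: "\<forall>a\<in>I. i1 \<le> a" and mn2: "\<forall>a\<in>I - {i1}. i2 \<le> a"
  shows "inspan I g (dsq i2)"
proof -
  have "Em g i2 a b + (g i2 i1 * g i2 i1) * Em g i1 a b = dsq i2 a b" if "a \<in> I" "b \<in> I" for a b
  proof -
    have lt: "i1 < i2" using mn i2 ne by force
    have G2: "Gf g i2 x = (if x = i1 then g i2 i1 else 0)" if "x \<in> I" for x
    proof -
      have "x \<noteq> i1 \<Longrightarrow> i2 \<le> x" using mn2 that by blast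
      thus ?thesis using lt by (auto simp: Gf_def)
    qed
    have G1: "Gf g i1 x = 0" if "x \<in> I" for x
      using that mn by (auto simp: Gf_def)
    have "Em g i2 a b + (g i2 i1 * g i2 i1) * Em g i1 a b =
       ((if a = i2 \<and> b = i2 then 1 else 0) - (if a = i1 then g i2 i1 else 0) * (if b = i1 then g i2 i1 else 0))
       + (g i2 i1 * g i2 i1) * (if a = i1 \<and> b = i1 then 1 else 0)"
      unfolding Em_def G1[OF that(1)] G1[OF that(2)] G2[OF that(1)] G2[OF that(2)] by simp
    also have "\<dots> = dsq i2 a b" unfolding dsq_def using lt by (cases "a = i1"; cases "b = i1") auto
    finally show ?thesis .
  qed
  hence *: "\<And>a b. a \<in> I \<Longrightarrow> b \<in> I \<Longrightarrow> Em g i2 a b + (g i2 i1 * g i2 i1) * Em g i1 a b = dsq i2 a b" .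
  have "inspan I g (\<lambda>a b. Em g i2 a b + (g i2 i1 * g i2 i1) * Em g i1 a b)"
    by (intro inspan_add inspan_smult inspan_Em i1 i2 fin)
  thus ?thesis by (rule inspan_cong) (rule *)
qed

theorem core:
  assumes "finite I" "finite I'" "hyp I g I' g' M" "i \<in> I"
  shows "\<exists>k\<in>I'. M k i \<noteq> 0 \<and> (\<forall>b\<in>I'. b \<noteq> k \<longrightarrow> M b i = 0)"
  using assms
proof (induction "card I" arbitrary: I I' i rule: less_induct)
  case less
  note fin = less.prems(1,2) and h = less.prems(3) and i = less.prems(4)
  have inj: "injM I I' M" using h hyp_def by auto
  have Ine: "I \<noteq> {}" using i by auto
  define i1 where "i1 = Min I"
  have i1: "i1 \<in> I" "\<forall>a\<in>I. i1 \<le> a" using Min_in[OF fin(1) Ine] Min_le[OF fin(1)] by (auto simp: i1_def)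
  obtain k1 where k1: "k1 \<in> I'" "M k1 i1 \<noteq> 0" "\<forall>b\<in>I'. b \<noteq> k1 \<longrightarrow> M b i1 = 0" "inspan I' g' (dsq k1)"
    using sq_transfer[OF fin h i1(1) sq_min1[OF fin(1) i1]] by blast
  show ?case
  proof (cases "i = i1")
    case True thus ?thesis using k1 by blast
  next
    case False
    define I2 where "I2 = I - {i1}"
    have I2: "finite I2" "I2 \<noteq> {}" "i \<in> I2" using fin False i by (auto simp: I2_def)
    define i2 where "i2 = Min I2"
    have i2: "i2 \<in> I" "i2 \<noteq> i1" "\<forall>a\<in>I - {i1}. i2 \<le> a"
      using Min_in[OF I2(1,2)] Min_le[OF I2(1)] by (auto simp: i2_def I2_def)
    obtain k2 where k2: "k2 \<in> I'" "M k2 i2 \<noteq> 0" "\<forall>b\<in>I'. b \<noteq> k2 \<longrightarrow> M b i2 = 0" "inspan I' g' (dsq k2)"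
      using sq_transfer[OF fin h i2(1) sq_min2[OF fin(1) i1(1) i2(1) i2(2)[symmetric] i1(2) i2(3)]] by blast
    show ?thesis
    proof (cases "i = i2")
      case True thus ?thesis using k2 by blast
    next
      case False2: False
      have k12: "k1 \<noteq> k2"
      proof
        assume kk: "k1 = k2"
        define v where "v = (\<lambda>x. if x = i1 then M k1 i2 else if x = i2 then - M k1 i1 else (0::rat))"
        have "(\<Sum>x\<in>I. M a x * v x) = 0" if a: "a \<in> I'" for a
        proof -
          have "(\<Sum>x\<in>I. M a x * v x) = (\<Sum>x\<in>I. (if x = i1 then M a i1 * M k1 i2 else 0) + (if x = i2 then - M a i2 * M k1 i1 else 0))"
            by (rule sum.cong) (use i2 in \<open>auto simp: v_def\<close>)
          also have "\<dots> = M a i1 * M k1 i2 - M a i2 * M k1 i1"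
            using fin i1 i2 by (simp add: sum.distrib sum.delta)
          also have "\<dots> = 0" using k1 k2 kk a by (cases "a = k1") auto
          finally show ?thesis .
        qed
        from injMD[OF inj this i1(1)] show False using k2 kk by (simp add: v_def)
      qed
      have lt1: "card (I - {i1}) < card I" using fin i1 by (meson card_Diff1_less)
      have lt2: "card (I - {i2}) < card I" using fin i2 by (meson card_Diff1_less)
      have h1: "hyp (I - {i1}) g (I' - {k1}) g' M"
        by (rule hyp_quot[OF fin h i1(1) k1(1,2,3,4)])
      have h2: "hyp (I - {i2}) g (I' - {k2}) g' M"
        by (rule hyp_quot[OF fin h i2(1) k2(1,2,3,4)])
      obtain a where a: "a \<in> I' - {k1}" "M a i \<noteq> 0" "\<forall>b\<in>I' - {k1}. b \<noteq> a \<longrightarrow> M b i = 0"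
        using less.hyps[OF lt1 _ _ h1, of i] fin i False by auto
      obtain c where c: "c \<in> I' - {k2}" "M c i \<noteq> 0" "\<forall>b\<in>I' - {k2}. b \<noteq> c \<longrightarrow> M b i = 0"
        using less.hyps[OF lt2 _ _ h2, of i] fin i False2 by auto
      have ac: "a = c"
      proof (rule ccontr)
        assume nac: "a \<noteq> c"
        have ak2: "a = k2" using a c nac by auto
        have ck1: "c = k1" using a c nac by auto
        define v where "v = (\<lambda>x. if x = i then 1 else if x = i1 then - M k1 i / M k1 i1
                               else if x = i2 then - M k2 i / M k2 i2 else (0::rat))"
        have "(\<Sum>x\<in>I. M b x * v x) = 0" if b: "b \<in> I'" for b
        proof -
          have "(\<Sum>x\<in>I. M b x * v x) = (\<Sum>x\<in>I. (if x = i then M b i else 0)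
               + (if x = i1 then - M b i1 * (M k1 i / M k1 i1) else 0)
               + (if x = i2 then - M b i2 * (M k2 i / M k2 i2) else 0))"
            by (rule sum.cong) (use i2 False False2 in \<open>auto simp: v_def\<close>)
          also have "\<dots> = M b i - M b i1 * (M k1 i / M k1 i1) - M b i2 * (M k2 i / M k2 i2)"
            using fin i1 i2 i by (simp add: sum.distrib sum.delta)
          also have "\<dots> = 0"
          proof -
            consider "b = k1" | "b = k2" | "b \<noteq> k1" "b \<noteq> k2" by blast
            thus ?thesis
            proof cases
              case 1 thus ?thesis using k1 k2 k12 by simp
            next
              case 2 thus ?thesis using k1 k2 k12 by simp
            next
              case 3
              have "M b i = 0" using a ak2 3 b by auto
              thus ?thesis using k1 k2 3 b by simp
            qed
          qed
          finally show ?thesis .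
        qed
        from injMD[OF inj this i] show False by (simp add: v_def)
      qed
      have "\<forall>b\<in>I'. b \<noteq> a \<longrightarrow> M b i = 0"
      proof (intro ballI impI)
        fix b assume b: "b \<in> I'" "b \<noteq> a"
        show "M b i = 0"
        proof (cases "b = k1")
          case True
          hence "b \<noteq> k2" using k12 by simp
          thus ?thesis using c ac b by auto
        next
          case False thus ?thesis using a b by auto
        qed
      qed
      thus ?thesis using a by blast
    qed
  qed
qed





definition mono2 :: "nat \<Rightarrow> nat \<Rightarrow> (nat \<Rightarrow>\<^sub>0 nat)" where
  "mono2 a b = Poly_Mapping.single a 1 + Poly_Mapping.single b 1"

definition lin :: "nat \<Rightarrow> (nat \<Rightarrow> rat) \<Rightarrow> mpoly" where
  "lin n u = (\<Sum>i\<in>{1..n}. Const (u i) * Var i)"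

lemma Const_mult: "Const a * Const b = Const (a * b)"
  by (simp add: Const_def mult_single)
lemma Const_add: "Const a + Const b = Const (a + b)"
  by (simp add: Const_def single_add)
lemma Const_diff: "Const a - Const b = Const (a - b)"
  by (simp add: Const_def single_diff)
lemma Const_uminus: "- Const a = Const (- a)"
  by (simp add: Const_def single_uminus)
lemma Const_0 [simp]: "Const 0 = 0"
  by (simp add: Const_def)
lemma Const_1 [simp]: "Const 1 = 1"
  by (simp add: Const_def)
lemma Const_sum: "(\<Sum>i\<in>S. Const (f i)) = Const (\<Sum>i\<in>S. f i)"
  by (induction S rule: infinite_finite_induct) (auto simp: Const_add)

lemma lookup_Const_mult: "Poly_Mapping.lookup (Const c * p) m = c * Poly_Mapping.lookup p m"
proof -
  have "Const c * p = Poly_Mapping.map ((*) c) p" by (simp add: Const_def mult_map_scale_conv_mult)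
  thus ?thesis by (simp add: map.rep_eq when_def)
qed

lemma Const_Var: "Const c * Var i = Poly_Mapping.single (Poly_Mapping.single i 1) c"
  by (simp add: Const_def Var_def mult_single)

lemma single_nat_eq: "(Poly_Mapping.single i (1::nat) = Poly_Mapping.single a 1) \<longleftrightarrow> i = a"
  by (metis lookup_single_eq lookup_single_not_eq zero_neq_one)

lemma lookup_lin: "Poly_Mapping.lookup (lin n u) m = (\<Sum>i\<in>{1..n}. (u i when Poly_Mapping.single i 1 = m))"
  by (simp add: lin_def lookup_sum Const_Var lookup_single)

lemma lookup_lin1: assumes "a \<in> {1..n}" shows " Poly_Mapping.lookup (lin n u) (Poly_Mapping.single a 1) = u a"
proof -
  have "(\<Sum>i\<in>{1..n}. (u i when Poly_Mapping.single i (1::nat) = Poly_Mapping.single a 1)) = (\<Sum>i\<in>{1..n}. if i = a then u i else 0)"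
  proof (rule sum.cong[OF refl])
    fix x show "(u x when Poly_Mapping.single x (1::nat) = Poly_Mapping.single a 1) = (if x = a then u x else 0)"
      unfolding when_def by (metis single_nat_eq)
  qed
  thus ?thesis using assms by (simp add: lookup_lin)
qed

lemma mono2_eq: "mono2 i k = mono2 a b \<longleftrightarrow> (i = a \<and> k = b) \<or> (i = b \<and> k = a)"
proof
  assume e: "mono2 i k = mono2 a b"
  have l: "Poly_Mapping.lookup (mono2 i k) x = Poly_Mapping.lookup (mono2 a b) x" for x using e by simp
  have lk: "Poly_Mapping.lookup (mono2 c d) x = (if c = x then 1 else 0) + (if d = x then 1 else 0)" for c d x
    by (simp add: mono2_def lookup_add lookup_single when_def)
  have "i = a \<or> i = b" using l[of i] unfolding lk by (auto split: if_splits)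
  moreover have "k = a \<or> k = b" using l[of k] unfolding lk by (auto split: if_splits)
  moreover have "a = i \<or> a = k" using l[of a] unfolding lk by (auto split: if_splits)
  moreover have "b = i \<or> b = k" using l[of b] unfolding lk by (auto split: if_splits)
  ultimately show "(i = a \<and> k = b) \<or> (i = b \<and> k = a)" by blast
next
  assume "(i = a \<and> k = b) \<or> (i = b \<and> k = a)"
  thus "mono2 i k = mono2 a b" by (auto simp: mono2_def add.commute)
qed

lemma lin_mult: "lin n u * lin n v = (\<Sum>i\<in>{1..n}. \<Sum>k\<in>{1..n}. Poly_Mapping.single (mono2 i k) (u i * v k))"
  by (simp add: lin_def sum_product Const_Var mult_single mono2_def)

lemma lookup_lin_mult:
  assumes "a \<in> {1..n}" "b \<in> {1..n}"
  shows "Poly_Mapping.lookup (lin n u * lin n v) (mono2 a b) = (if a = b then u a * v a else u a * v b + u b * v a)"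
proof -
  have "Poly_Mapping.lookup (lin n u * lin n v) (mono2 a b)
     = (\<Sum>i\<in>{1..n}. \<Sum>k\<in>{1..n}. (u i * v k when (i = a \<and> k = b) \<or> (i = b \<and> k = a)))"
    by (simp add: lin_mult lookup_sum lookup_single mono2_eq)
  also have "\<dots> = (if a = b then u a * v a else u a * v b + u b * v a)"
  proof (cases "a = b")
    case True
    have "(\<Sum>i\<in>{1..n}. \<Sum>k\<in>{1..n}. (u i * v k when (i = a \<and> k = b) \<or> (i = b \<and> k = a)))
        = (\<Sum>i\<in>{1..n}. if i = a then (\<Sum>k\<in>{1..n}. if k = a then u i * v k else 0) else 0)"
      using True by (intro sum.cong) (auto simp: when_def)
    thus ?thesis using True assms by (simp add: sum.delta)
  next
    case False
    have "(\<Sum>i\<in>{1..n}. \<Sum>k\<in>{1..n}. (u i * v k when (i = a \<and> k = b) \<or> (i = b \<and> k = a)))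
        = (\<Sum>i\<in>{1..n}. (if i = a then (\<Sum>k\<in>{1..n}. if k = b then u i * v k else 0) else 0)
                     + (if i = b then (\<Sum>k\<in>{1..n}. if k = a then u i * v k else 0) else 0))"
      using False by (intro sum.cong) (auto simp: when_def sum.distrib[symmetric] intro!: sum.cong)
    thus ?thesis using False assms by (simp add: sum.delta sum.distrib)
  qed
  finally show ?thesis .
qed




lemma keys_mono: "Poly_Mapping.keys (a + b :: nat \<Rightarrow>\<^sub>0 nat) = Poly_Mapping.keys a \<union> Poly_Mapping.keys b"
  by (auto simp: in_keys_iff lookup_add)

lemma polys_in_add: "p \<in> polys_in n \<Longrightarrow> q \<in> polys_in n \<Longrightarrow> p + q \<in> polys_in n"
  unfolding polys_in_def using keys_add[of p q] by blast

lemma polys_in_uminus: "p \<in> polys_in n \<Longrightarrow> - p \<in> polys_in n"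
  unfolding polys_in_def by (simp add: in_keys_iff)

lemma polys_in_diff: "p \<in> polys_in n \<Longrightarrow> q \<in> polys_in n \<Longrightarrow> p - q \<in> polys_in n"
  using polys_in_add[of p n "-q"] polys_in_uminus[of q n] by simp

lemma polys_in_mult: "p \<in> polys_in n \<Longrightarrow> q \<in> polys_in n \<Longrightarrow> p * q \<in> polys_in n"
  unfolding polys_in_def using keys_mult[of p q] keys_mono by blast

lemma polys_in_0: "0 \<in> polys_in n" by (simp add: polys_in_def)
lemma polys_in_1: "1 \<in> polys_in n" by (simp add: polys_in_def)
lemma polys_in_Const: "Const c \<in> polys_in n" by (simp add: polys_in_def Const_def)
lemma polys_in_Var: "i \<in> {1..n} \<Longrightarrow> Var i \<in> polys_in n" by (simp add: polys_in_def Var_def)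

lemma polys_in_sum: "(\<And>x. x \<in> S \<Longrightarrow> f x \<in> polys_in n) \<Longrightarrow> (\<Sum>x\<in>S. f x) \<in> polys_in n"
  by (induction S rule: infinite_finite_induct) (auto intro: polys_in_add polys_in_0)

lemma polys_in_lin: "lin n u \<in> polys_in n"
  unfolding lin_def by (auto intro!: polys_in_sum polys_in_mult polys_in_Const polys_in_Var)

lemma poly_ring_simps [simp]:
  "carrier (poly_ring n) = polys_in n" "monoid.mult (poly_ring n) = (*)" "one (poly_ring n) = 1"
  "zero (poly_ring n) = 0" "add (poly_ring n) = (+)"
  by (simp_all add: poly_ring_def)

lemma cring_poly_ring: "cring (poly_ring n)"
proof (rule cringI)
  show "abelian_group (poly_ring n)"
  proof (rule abelian_groupI)
    fix x assume "x \<in> carrier (poly_ring n)"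
    thus "\<exists>y\<in>carrier (poly_ring n). y \<oplus>\<^bsub>poly_ring n\<^esub> x = \<zero>\<^bsub>poly_ring n\<^esub>"
      by (intro bexI[of _ "- x"]) (simp_all add: polys_in_uminus)
  qed (auto intro: polys_in_add polys_in_0 simp: add.assoc add.commute)
  show "comm_monoid (poly_ring n)"
    by (rule comm_monoidI) (auto intro: polys_in_mult polys_in_1 simp: mult.assoc mult.commute)
qed (simp add: distrib_right)

lemma a_inv_poly: "p \<in> polys_in n \<Longrightarrow> a_inv (poly_ring n) p = - p"
proof -
  interpret cring "poly_ring n" by (rule cring_poly_ring)
  assume p: "p \<in> polys_in n"
  show ?thesis by (rule minus_equality) (simp_all add: p polys_in_uminus)
qed

lemma a_minus_poly: "p \<in> polys_in n \<Longrightarrow> q \<in> polys_in n \<Longrightarrow> a_minus (poly_ring n) p q = p - q"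
  by (simp add: a_minus_def a_inv_poly)

definition mdeg :: "(nat \<Rightarrow>\<^sub>0 nat) \<Rightarrow> nat" where
  "mdeg m = (\<Sum>i\<in>Poly_Mapping.keys m. Poly_Mapping.lookup m i)"

lemma mdeg_superset: "finite S \<Longrightarrow> Poly_Mapping.keys m \<subseteq> S \<Longrightarrow> mdeg m = (\<Sum>i\<in>S. Poly_Mapping.lookup m i)"
  unfolding mdeg_def by (rule sum.mono_neutral_left) (auto simp: in_keys_iff)

lemma mdeg_add: "mdeg (a + b) = mdeg a + mdeg b"
proof -
  let ?S = "Poly_Mapping.keys a \<union> Poly_Mapping.keys b"
  have "mdeg (a + b) = (\<Sum>i\<in>?S. Poly_Mapping.lookup (a + b) i)"
    by (rule mdeg_superset) (auto simp: keys_mono)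
  also have "\<dots> = (\<Sum>i\<in>?S. Poly_Mapping.lookup a i) + (\<Sum>i\<in>?S. Poly_Mapping.lookup b i)"
    by (simp add: lookup_add sum.distrib)
  also have "\<dots> = mdeg a + mdeg b" using mdeg_superset[of ?S a] mdeg_superset[of ?S b] by simp
  finally show ?thesis .
qed

lemma mdeg_zero_iff: "mdeg m = 0 \<longleftrightarrow> m = 0"
proof
  assume "mdeg m = 0"
  hence "\<forall>i\<in>Poly_Mapping.keys m. Poly_Mapping.lookup m i = 0" by (simp add: mdeg_def)
  hence "\<forall>i. Poly_Mapping.lookup m i = 0" by (auto simp: in_keys_iff)
  thus "m = 0" by (intro poly_mapping_eqI) simp
qed (simp add: mdeg_def)

lemma mdeg_single [simp]: "mdeg (Poly_Mapping.single i e) = e"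
  by (simp add: mdeg_def)

lemma mdeg_mono2 [simp]: "mdeg (mono2 a b) = 2"
  by (simp add: mono2_def mdeg_add)

lemma mdeg_one: assumes "mdeg m = 1" shows "\<exists>i\<in>Poly_Mapping.keys m. m = Poly_Mapping.single i 1"
proof -
  have "Poly_Mapping.keys m \<noteq> {}" using assms by (auto simp: mdeg_def)
  then obtain i where i: "i \<in> Poly_Mapping.keys m" by blast
  have "mdeg m = Poly_Mapping.lookup m i + (\<Sum>x\<in>Poly_Mapping.keys m - {i}. Poly_Mapping.lookup m x)"
    unfolding mdeg_def using i by (simp add: sum.remove)
  moreover have "Poly_Mapping.lookup m i \<ge> 1" using i by (simp add: in_keys_iff)
  ultimately have li: "Poly_Mapping.lookup m i = 1" and rest: "(\<Sum>x\<in>Poly_Mapping.keys m - {i}. Poly_Mapping.lookup m x) = 0"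
    using assms by auto
  have "\<forall>x\<in>Poly_Mapping.keys m - {i}. Poly_Mapping.lookup m x = 0" using rest by simp
  hence "\<forall>x. x \<noteq> i \<longrightarrow> Poly_Mapping.lookup m x = 0" by (auto simp: in_keys_iff)
  hence "m = Poly_Mapping.single i 1"
    by (intro poly_mapping_eqI) (metis li lookup_single_eq lookup_single_not_eq)
  thus ?thesis using i by blast
qed

lemma lookup_mult_deg2:
  assumes r: "\<forall>q\<in>Poly_Mapping.keys r. mdeg q = 2" and m: "mdeg m \<le> 2"
  shows "Poly_Mapping.lookup (f * r) m = (if mdeg m = 2 then Poly_Mapping.lookup f 0 * Poly_Mapping.lookup r m else 0)"
proof -
  have inner: "(\<Sum>q. Poly_Mapping.lookup r q when m = l + q) = (Poly_Mapping.lookup r m when l = 0 \<and> mdeg m = 2)" for l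
  proof -
    have "(\<lambda>q. Poly_Mapping.lookup r q when m = l + q) = (\<lambda>q. (Poly_Mapping.lookup r m when l = 0 \<and> mdeg m = 2) when q = m)"
    proof
      fix q
      show "(Poly_Mapping.lookup r q when m = l + q) = ((Poly_Mapping.lookup r m when l = 0 \<and> mdeg m = 2) when q = m)"
      proof (cases "Poly_Mapping.lookup r q = 0")
        case True thus ?thesis by (auto simp: when_def)
      next
        case False
        hence q2: "mdeg q = 2" using r by (simp add: in_keys_iff)
        show ?thesis
        proof (cases "m = l + q")
          case True
          hence "mdeg l = 0" using m q2 by (simp add: mdeg_add)
          hence "l = 0" by (simp add: mdeg_zero_iff)
          thus ?thesis using True q2 by (simp add: when_def)
        next
          case False thus ?thesis by (auto simp: when_def)
        qed
      qed
    qed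
    hence "(\<Sum>q. Poly_Mapping.lookup r q when m = l + q) = (\<Sum>q. (Poly_Mapping.lookup r m when l = 0 \<and> mdeg m = 2) when q = m)"
      by (rule arg_cong)
    also have "\<dots> = (Poly_Mapping.lookup r m when l = 0 \<and> mdeg m = 2)" by (rule Sum_any_when_equal)
    finally show ?thesis .
  qed
  have "Poly_Mapping.lookup (f * r) m = (\<Sum>l. Poly_Mapping.lookup f l * (Poly_Mapping.lookup r m when l = 0 \<and> mdeg m = 2))"
    by (simp add: lookup_mult inner)
  also have "\<dots> = (\<Sum>l. (Poly_Mapping.lookup f 0 * Poly_Mapping.lookup r m when mdeg m = 2) when l = (0::nat \<Rightarrow>\<^sub>0 nat))"
  proof -
    have "\<forall>l. Poly_Mapping.lookup f l * (Poly_Mapping.lookup r m when l = 0 \<and> mdeg m = 2)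
       = ((Poly_Mapping.lookup f 0 * Poly_Mapping.lookup r m when mdeg m = 2) when l = 0)"
      by (auto simp: when_def)
    thus ?thesis by (simp only:)
  qed
  also have "\<dots> = (if mdeg m = 2 then Poly_Mapping.lookup f 0 * Poly_Mapping.lookup r m else 0)"
    by (simp add: when_def)
  finally show ?thesis .
qed




definition ellf :: "(nat \<Rightarrow> nat \<Rightarrow> int) \<Rightarrow> nat \<Rightarrow> nat \<Rightarrow> mpoly \<Rightarrow> rat" where
  "ellf A a b q = Poly_Mapping.lookup q (mono2 a b) + of_int (A a b) * Poly_Mapping.lookup q (mono2 b b)"

definition PhiOK :: "nat \<Rightarrow> (nat \<Rightarrow> nat \<Rightarrow> int) \<Rightarrow> mpoly \<Rightarrow> bool" where
  "PhiOK n A q \<longleftrightarrow> Poly_Mapping.lookup q 0 = 0 \<and> (\<forall>a. Poly_Mapping.lookup q (Poly_Mapping.single a 1) = 0)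
     \<and> (\<forall>a\<in>{1..n}. \<forall>b\<in>{1..n}. a < b \<longrightarrow> ellf A a b q = 0)"

definition Jset :: "nat \<Rightarrow> (nat \<Rightarrow> nat \<Rightarrow> int) \<Rightarrow> mpoly set" where
  "Jset n A = {p \<in> polys_in n. \<forall>f\<in>polys_in n. PhiOK n A (f * p)}"

lemma PhiOK_add: "PhiOK n A p \<Longrightarrow> PhiOK n A q \<Longrightarrow> PhiOK n A (p + q)"
  by (simp add: PhiOK_def ellf_def lookup_add algebra_simps)

lemma ellf_uminus: "ellf A a b (- p) = - ellf A a b p"
  by (simp add: ellf_def algebra_simps)

lemma PhiOK_uminus: "PhiOK n A p \<Longrightarrow> PhiOK n A (- p)"
  unfolding PhiOK_def ellf_uminus by simp

lemma PhiOK_0: "PhiOK n A 0"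
  by (simp add: PhiOK_def ellf_def)

lemma ring_poly_ring: "ring (poly_ring n)"
  using cring_poly_ring cring.axioms(1) by blast

lemma ideal_Jset: "ideal (Jset n A) (poly_ring n)"
proof (rule idealI)
  show "ring (poly_ring n)" by (rule ring_poly_ring)
  show "subgroup (Jset n A) (add_monoid (poly_ring n))"
  proof (rule subgroup.intro)
    show "Jset n A \<subseteq> carrier (add_monoid (poly_ring n))" by (auto simp: Jset_def)
    fix x y assume x: "x \<in> Jset n A" and y: "y \<in> Jset n A"
    show "x \<otimes>\<^bsub>add_monoid (poly_ring n)\<^esub> y \<in> Jset n A"
      using x y by (auto simp: Jset_def polys_in_add distrib_left intro: PhiOK_add)
  next
    show "\<one>\<^bsub>add_monoid (poly_ring n)\<^esub> \<in> Jset n A" by (simp add: Jset_def polys_in_0 PhiOK_0)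
  next
    fix x assume x: "x \<in> Jset n A"
    have "inv\<^bsub>add_monoid (poly_ring n)\<^esub> x = a_inv (poly_ring n) x" by (simp add: a_inv_def)
    also have "\<dots> = - x" using x by (simp add: a_inv_poly Jset_def)
    finally show "inv\<^bsub>add_monoid (poly_ring n)\<^esub> x \<in> Jset n A"
      using x by (auto simp: Jset_def polys_in_uminus intro: PhiOK_uminus)
  qed
next
  fix a x assume a: "a \<in> Jset n A" and x: "x \<in> carrier (poly_ring n)"
  have "x * a \<in> Jset n A"
    using a x by (auto simp: Jset_def polys_in_mult mult.assoc[symmetric])
  thus "x \<otimes>\<^bsub>poly_ring n\<^esub> a \<in> Jset n A" "a \<otimes>\<^bsub>poly_ring n\<^esub> x \<in> Jset n A"
    by (simp_all add: mult.commute)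
qed

lemma Var_lin: "j \<in> {1..n} \<Longrightarrow> Var j = lin n (\<lambda>i. if i = j then 1 else 0)"
proof -
  assume j: "j \<in> {1..n}"
  have "lin n (\<lambda>i. if i = j then 1 else 0) = (\<Sum>i\<in>{1..n}. if i = j then Var i else 0)"
    unfolding lin_def by (rule sum.cong) auto
  thus ?thesis using j by (simp add: sum.delta)
qed

lemma alpha_lin: "j \<le> n \<Longrightarrow> alpha A j = lin n (\<lambda>i. if i < j then of_int (A i j) else 0)"
proof -
  assume j: "j \<le> n"
  have "lin n (\<lambda>i. if i < j then of_int (A i j) else 0) = (\<Sum>i\<in>{1..n}. if i \<in> {1..<j} then Const (of_int (A i j)) * Var i else 0)"
    unfolding lin_def by (rule sum.cong) auto
  also have "\<dots> = (\<Sum>i\<in>{1..n} \<inter> {1..<j}. Const (of_int (A i j)) * Var i)"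
    by (simp add: sum.inter_restrict)
  also have "{1..n} \<inter> {1..<j} = {1..<j}" using j by auto
  finally show ?thesis by (simp add: alpha_def)
qed

lemma keys_diff_sub: "Poly_Mapping.keys (p - q) \<subseteq> Poly_Mapping.keys p \<union> Poly_Mapping.keys (q :: mpoly)"
  by (auto simp: in_keys_iff lookup_minus)

lemma keys_sum_sub: "Poly_Mapping.keys (\<Sum>x\<in>S. f x :: mpoly) \<subseteq> (\<Union>x\<in>S. Poly_Mapping.keys (f x))"
  by (induction S rule: infinite_finite_induct) (auto dest: subsetD[OF keys_add])

lemma keys_lin_mult: "q \<in> Poly_Mapping.keys (lin n u * lin n v) \<Longrightarrow> mdeg q = 2"
proof -
  assume q: "q \<in> Poly_Mapping.keys (lin n u * lin n v)"
  have "Poly_Mapping.keys (lin n u * lin n v) \<subseteq> (\<Union>i\<in>{1..n}. Poly_Mapping.keys (\<Sum>k\<in>{1..n}. Poly_Mapping.single (mono2 i k) (u i * v k)))"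
    unfolding lin_mult by (rule keys_sum_sub)
  with q obtain i where "q \<in> Poly_Mapping.keys (\<Sum>k\<in>{1..n}. Poly_Mapping.single (mono2 i k) (u i * v k))" by blast
  hence "q \<in> (\<Union>k\<in>{1..n}. Poly_Mapping.keys (Poly_Mapping.single (mono2 i k) (u i * v k)))"
    using keys_sum_sub by blast
  then obtain k where "q \<in> Poly_Mapping.keys (Poly_Mapping.single (mono2 i k) (u i * v k))" by blast
  hence "q = mono2 i k" by (simp split: if_splits)
  thus ?thesis by simp
qed

lemma rels_sub_Jset: "bott_rels n A \<subseteq> Jset n A"
proof
  fix r assume "r \<in> bott_rels n A"
  then obtain j where j: "j \<in> {1..n}" and r: "r = Var j * Var j - alpha A j * Var j"
    by (auto simp: bott_rels_def)
  define d where "d = (\<lambda>i. if i = j then (1::rat) else 0)"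
  define al where "al = (\<lambda>i. if i < j then (of_int (A i j) :: rat) else 0)"
  have r2: "r = lin n d * lin n d - lin n al * lin n d"
    using r Var_lin[OF j] alpha_lin[of j n A] j by (simp add: d_def al_def)
  have rcar: "r \<in> polys_in n" unfolding r2 by (intro polys_in_diff polys_in_mult polys_in_lin)
  have keys2: "\<forall>q\<in>Poly_Mapping.keys r. mdeg q = 2"
    unfolding r2 using keys_diff_sub keys_lin_mult by blast
  have ell0: "ellf A a b r = 0" if ab: "a \<in> {1..n}" "b \<in> {1..n}" "a < b" for a b
  proof -
    have e1: "Poly_Mapping.lookup r (mono2 a b) = (d a * d b + d b * d a) - (al a * d b + al b * d a)"
      unfolding r2 lookup_minus using ab by (simp add: lookup_lin_mult)
    have e2: "Poly_Mapping.lookup r (mono2 b b) = d b * d b - al b * d b"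
      unfolding r2 lookup_minus using ab by (simp add: lookup_lin_mult)
    show ?thesis
    proof (cases "b = j")
      case True
      hence "d b = 1" "d a = 0" "al b = 0" "al a = of_int (A a j)" using ab by (auto simp: d_def al_def)
      thus ?thesis using e1 e2 True by (simp add: ellf_def)
    next
      case False
      hence db: "d b = 0" by (simp add: d_def)
      have "al b * d a = 0" using ab by (cases "a = j") (auto simp: d_def al_def)
      thus ?thesis using e1 e2 db by (simp add: ellf_def)
    qed
  qed
  have "PhiOK n A (f * r)" if f: "f \<in> polys_in n" for f
  proof -
    have l0: "Poly_Mapping.lookup (f * r) 0 = 0"
      using lookup_mult_deg2[OF keys2, of 0 f] by (simp add: mdeg_def)
    have l1: "Poly_Mapping.lookup (f * r) (Poly_Mapping.single a 1) = 0" for a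
      using lookup_mult_deg2[OF keys2, of "Poly_Mapping.single a 1" f] by simp
    have l2: "ellf A a b (f * r) = Poly_Mapping.lookup f 0 * ellf A a b r" for a b
      using lookup_mult_deg2[OF keys2, of "mono2 a b" f] lookup_mult_deg2[OF keys2, of "mono2 b b" f]
      by (simp add: ellf_def algebra_simps)
    show ?thesis using l0 l1 l2 ell0 by (simp add: PhiOK_def)
  qed
  thus "r \<in> Jset n A" using rcar by (simp add: Jset_def)
qed

lemma rels_carrier: "bott_rels n A \<subseteq> carrier (poly_ring n)"
  using rels_sub_Jset by (auto simp: Jset_def)

lemma ideal_bott: "ideal (bott_ideal n A) (poly_ring n)"
  unfolding bott_ideal_def by (rule ring.genideal_ideal[OF ring_poly_ring rels_carrier])

lemma bott_sub_Jset: "bott_ideal n A \<subseteq> Jset n A"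
  unfolding bott_ideal_def by (rule ring.genideal_minimal[OF ring_poly_ring ideal_Jset rels_sub_Jset])

lemma ideal_PhiOK: assumes "p \<in> bott_ideal n A" shows "PhiOK n A p"
proof -
  have "p \<in> Jset n A" using bott_sub_Jset assms by blast
  hence "PhiOK n A (1 * p)" unfolding Jset_def using polys_in_1 by blast
  thus ?thesis by simp
qed

lemma rel_in_ideal: assumes "j \<in> {1..n}" shows "Var j * Var j - alpha A j * Var j \<in> bott_ideal n A"
proof -
  have "Var j * Var j - alpha A j * Var j \<in> bott_rels n A" using assms unfolding bott_rels_def by blast
  thus ?thesis using ring.genideal_self[OF ring_poly_ring rels_carrier] unfolding bott_ideal_def by blast
qed




lemma cring_coh: "cring (coh n A)"
  unfolding coh_def by (rule ideal.quotient_is_cring[OF ideal_bott cring_poly_ring])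

lemma coh_simps:
  "carrier (coh n A) = a_rcosets\<^bsub>poly_ring n\<^esub> (bott_ideal n A)"
  "monoid.mult (coh n A) = rcoset_mult (poly_ring n) (bott_ideal n A)"
  "one (coh n A) = cls n A 1"
  "zero (coh n A) = bott_ideal n A"
  "add (coh n A) = set_add (poly_ring n)"
  by (simp_all add: coh_def FactRing_def cls_def)

lemma cls_carrier: assumes "p \<in> polys_in n" shows "cls n A p \<in> carrier (coh n A)"
proof -
  interpret ideal "bott_ideal n A" "poly_ring n" by (rule ideal_bott)
  show ?thesis unfolding coh_simps cls_def using a_rcosetsI[OF a_subset] assms by simp
qed

lemma cls_mult: assumes "p \<in> polys_in n" "q \<in> polys_in n"
  shows "cls n A p \<otimes>\<^bsub>coh n A\<^esub> cls n A q = cls n A (p * q)"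
proof -
  interpret ideal "bott_ideal n A" "poly_ring n" by (rule ideal_bott)
  show ?thesis unfolding coh_simps cls_def using rcoset_mult_add assms by simp
qed

lemma cls_add: assumes "p \<in> polys_in n" "q \<in> polys_in n"
  shows "cls n A p \<oplus>\<^bsub>coh n A\<^esub> cls n A q = cls n A (p + q)"
proof -
  interpret ideal "bott_ideal n A" "poly_ring n" by (rule ideal_bott)
  show ?thesis unfolding coh_simps cls_def using a_rcos_sum assms by simp
qed

lemma cls_0: "cls n A 0 = \<zero>\<^bsub>coh n A\<^esub>"
proof -
  interpret ideal "bott_ideal n A" "poly_ring n" by (rule ideal_bott)
  have "bott_ideal n A +>\<^bsub>poly_ring n\<^esub> \<zero>\<^bsub>poly_ring n\<^esub> = bott_ideal n A"
    by (rule ring.a_rcos_zero[OF ring_poly_ring ideal_bott]) (rule additive_subgroup.zero_closed[OF ideal.axioms(1)[OF ideal_bott]])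
  thus ?thesis unfolding coh_simps cls_def by simp
qed

lemma cls_1: "cls n A 1 = \<one>\<^bsub>coh n A\<^esub>"
  by (simp add: coh_simps)

lemma cls_eq: assumes "p \<in> polys_in n" "q \<in> polys_in n"
  shows "cls n A p = cls n A q \<longleftrightarrow> p - q \<in> bott_ideal n A"
  using ring.quotient_eq_iff_same_a_r_cos[OF ring_poly_ring ideal_bott, where a = p and b = q] assms
  by (simp add: cls_def a_minus_poly)

lemma cls_zero_iff: assumes "p \<in> polys_in n" shows "cls n A p = \<zero>\<^bsub>coh n A\<^esub> \<longleftrightarrow> p \<in> bott_ideal n A"
  using cls_eq[OF assms polys_in_0, of A] by (simp add: cls_0)

context
  fixes n :: nat and A B :: "nat \<Rightarrow> nat \<Rightarrow> int" and \<psi> :: "mpoly set \<Rightarrow> mpoly set"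
  assumes iso: "\<psi> \<in> ring_iso (coh n A) (coh n B)"
begin

lemma psi_carrier: "x \<in> carrier (coh n A) \<Longrightarrow> \<psi> x \<in> carrier (coh n B)"
  using ring_iso_memE(1)[OF iso] by blast

lemma psi_mult: "x \<in> carrier (coh n A) \<Longrightarrow> y \<in> carrier (coh n A) \<Longrightarrow> \<psi> (x \<otimes>\<^bsub>coh n A\<^esub> y) = \<psi> x \<otimes>\<^bsub>coh n B\<^esub> \<psi> y"
  using ring_iso_memE(2)[OF iso] by blast

lemma psi_add: "x \<in> carrier (coh n A) \<Longrightarrow> y \<in> carrier (coh n A) \<Longrightarrow> \<psi> (x \<oplus>\<^bsub>coh n A\<^esub> y) = \<psi> x \<oplus>\<^bsub>coh n B\<^esub> \<psi> y"
  using ring_iso_memE(3)[OF iso] by blast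

lemma psi_one: "\<psi> \<one>\<^bsub>coh n A\<^esub> = \<one>\<^bsub>coh n B\<^esub>"
  using ring_iso_memE(4)[OF iso] by blast

lemma psi_inj: "inj_on \<psi> (carrier (coh n A))"
  using ring_iso_memE(5)[OF iso] bij_betw_def by blast

lemma psi_zero: "\<psi> \<zero>\<^bsub>coh n A\<^esub> = \<zero>\<^bsub>coh n B\<^esub>"
proof -
  have h: "\<psi> \<in> ring_hom (coh n A) (coh n B)" using iso ring_iso_def by auto
  show ?thesis by (rule ring_hom_zero[OF h cring.axioms(1)[OF cring_coh] cring.axioms(1)[OF cring_coh]])
qed

lemma psi_cls_mult: "p \<in> polys_in n \<Longrightarrow> q \<in> polys_in n \<Longrightarrow>
    \<psi> (cls n A (p * q)) = \<psi> (cls n A p) \<otimes>\<^bsub>coh n B\<^esub> \<psi> (cls n A q)"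
  by (simp add: cls_mult[symmetric] psi_mult cls_carrier)

lemma psi_cls_add: "p \<in> polys_in n \<Longrightarrow> q \<in> polys_in n \<Longrightarrow>
    \<psi> (cls n A (p + q)) = \<psi> (cls n A p) \<oplus>\<^bsub>coh n B\<^esub> \<psi> (cls n A q)"
  by (simp add: cls_add[symmetric] psi_add cls_carrier)

lemma psi_Const_nat: "\<psi> (cls n A (Const (of_nat k))) = cls n B (Const (of_nat k))"
proof (induction k)
  case 0 thus ?case using psi_zero by (simp add: cls_0)
next
  case (Suc k)
  have e: "Const (of_nat (Suc k)) = Const (of_nat k) + 1" by (simp add: Const_add[symmetric])
  have "\<psi> (cls n A (Const (of_nat k) + 1)) = \<psi> (cls n A (Const (of_nat k))) \<oplus>\<^bsub>coh n B\<^esub> \<psi> (cls n A 1)"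
    by (rule psi_cls_add) (simp_all add: polys_in_Const polys_in_1)
  also have "\<dots> = cls n B (Const (of_nat k)) \<oplus>\<^bsub>coh n B\<^esub> cls n B 1"
    by (simp add: Suc cls_1 psi_one)
  also have "\<dots> = cls n B (Const (of_nat k) + 1)"
    by (rule cls_add) (simp_all add: polys_in_Const polys_in_1)
  finally show ?case unfolding e .
qed

lemma psi_Const_neg: assumes "\<psi> (cls n A (Const c)) = cls n B (Const c)"
  shows "\<psi> (cls n A (Const (- c))) = cls n B (Const (- c))"
proof -
  interpret B: cring "coh n B" by (rule cring_coh)
  have z: "Const (- c) + Const c = 0" by (simp add: Const_add)
  have "\<psi> (cls n A (Const (- c))) \<oplus>\<^bsub>coh n B\<^esub> cls n B (Const c) = \<zero>\<^bsub>coh n B\<^esub>"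
    using psi_cls_add[of "Const (- c)" "Const c"] z assms psi_zero by (simp add: polys_in_Const cls_0)
  hence 1: "\<ominus>\<^bsub>coh n B\<^esub> cls n B (Const c) = \<psi> (cls n A (Const (- c)))"
    by (intro B.minus_equality) (simp_all add: cls_carrier polys_in_Const psi_carrier)
  have "cls n B (Const (- c)) \<oplus>\<^bsub>coh n B\<^esub> cls n B (Const c) = \<zero>\<^bsub>coh n B\<^esub>"
    using z by (simp add: cls_add polys_in_Const cls_0)
  hence 2: "\<ominus>\<^bsub>coh n B\<^esub> cls n B (Const c) = cls n B (Const (- c))"
    by (intro B.minus_equality) (simp_all add: cls_carrier polys_in_Const)
  show ?thesis using 1 2 by simp
qed

lemma psi_Const_int: "\<psi> (cls n A (Const (of_int k))) = cls n B (Const (of_int k))"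
proof (cases "k \<ge> 0")
  case True
  then obtain m where "k = int m" by (metis nonneg_eq_int)
  thus ?thesis using psi_Const_nat[of m] by simp
next
  case False
  then obtain m where "k = - int m" by (metis neg_int_cases nat_le_linear not_le of_nat_Suc)
  thus ?thesis using psi_Const_neg[OF psi_Const_nat[of m]] by simp
qed

lemma psi_Const: "\<psi> (cls n A (Const c)) = cls n B (Const c)"
proof -
  interpret B: cring "coh n B" by (rule cring_coh)
  obtain p q where pq: "quotient_of c = (p, q)" by (cases "quotient_of c") auto
  have q0: "q > 0" using quotient_of_denom_pos[OF pq] .
  have c: "c = of_int p / of_int q" using quotient_of_div[OF pq] .
  have cq: "Const c * Const (of_int q) = Const (of_int p)" using q0 c by (simp add: Const_mult)
  let ?x = "\<psi> (cls n A (Const c))"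
  have xc: "?x \<in> carrier (coh n B)" by (simp add: psi_carrier cls_carrier polys_in_Const)
  have "?x \<otimes>\<^bsub>coh n B\<^esub> cls n B (Const (of_int q)) = cls n B (Const (of_int p))"
    using psi_cls_mult[of "Const c" "Const (of_int q)"] cq psi_Const_int[of q] psi_Const_int[of p]
    by (simp add: polys_in_Const)
  hence "?x \<otimes>\<^bsub>coh n B\<^esub> cls n B (Const (of_int q)) \<otimes>\<^bsub>coh n B\<^esub> cls n B (Const (1 / of_int q))
       = cls n B (Const (of_int p)) \<otimes>\<^bsub>coh n B\<^esub> cls n B (Const (1 / of_int q))" by simp
  hence "?x \<otimes>\<^bsub>coh n B\<^esub> (cls n B (Const (of_int q)) \<otimes>\<^bsub>coh n B\<^esub> cls n B (Const (1 / of_int q)))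
       = cls n B (Const (of_int p) * Const (1 / of_int q))"
    using xc by (simp add: B.m_assoc cls_carrier polys_in_Const cls_mult)
  hence "?x \<otimes>\<^bsub>coh n B\<^esub> \<one>\<^bsub>coh n B\<^esub> = cls n B (Const c)"
    using q0 c by (simp add: cls_mult polys_in_Const Const_mult cls_1[symmetric])
  thus ?thesis using xc by simp
qed

lemma psi_lin_comb:
  assumes "finite S" "\<And>s. s \<in> S \<Longrightarrow> p s \<in> polys_in n" "\<And>s. s \<in> S \<Longrightarrow> p' s \<in> polys_in n"
    "\<And>s. s \<in> S \<Longrightarrow> \<psi> (cls n A (p s)) = cls n B (p' s)"
  shows "\<psi> (cls n A (\<Sum>s\<in>S. Const (c s) * p s)) = cls n B (\<Sum>s\<in>S. Const (c s) * p' s)"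
  using assms
proof (induction S rule: finite_induct)
  case empty thus ?case using psi_zero by (simp add: cls_0)
next
  case (insert x F)
  have c1: "(\<Sum>s\<in>F. Const (c s) * p s) \<in> polys_in n" "(\<Sum>s\<in>F. Const (c s) * p' s) \<in> polys_in n"
    using insert by (auto intro!: polys_in_sum polys_in_mult polys_in_Const)
  have px: "p x \<in> polys_in n" "p' x \<in> polys_in n" using insert by auto
  have "\<psi> (cls n A (\<Sum>s\<in>insert x F. Const (c s) * p s))
      = \<psi> (cls n A (Const (c x) * p x)) \<oplus>\<^bsub>coh n B\<^esub> \<psi> (cls n A (\<Sum>s\<in>F. Const (c s) * p s))"
    using insert c1 px by (simp add: psi_cls_add polys_in_mult polys_in_Const)
  also have "\<psi> (cls n A (Const (c x) * p x)) = cls n B (Const (c x) * p' x)"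
    using insert px psi_Const[of "c x"] by (simp add: psi_cls_mult polys_in_Const cls_mult)
  also have "\<psi> (cls n A (\<Sum>s\<in>F. Const (c s) * p s)) = cls n B (\<Sum>s\<in>F. Const (c s) * p' s)"
    using insert by auto
  finally show ?case using insert c1 px by (simp add: cls_add polys_in_mult polys_in_Const)
qed

end




definition Yc :: "(nat \<Rightarrow> nat \<Rightarrow> int) \<Rightarrow> nat \<Rightarrow> nat \<Rightarrow> rat" where
  "Yc A j i = (if i = j then 1 else 0) - (if i < j then of_int (A i j) / 2 else 0)"

definition ylin :: "nat \<Rightarrow> (nat \<Rightarrow> nat \<Rightarrow> int) \<Rightarrow> (nat \<Rightarrow> rat) \<Rightarrow> mpoly" where
  "ylin n A d = (\<Sum>i\<in>{1..n}. Const (d i) * ypoly A i)"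

definition SB :: "(nat \<Rightarrow> nat \<Rightarrow> int) \<Rightarrow> nat \<Rightarrow> mpoly set" where
  "SB A j = {p. \<exists>d. p = (\<Sum>i\<in>{1..<j}. Const (d i) * ypoly A i)}"

lemma lin_add: "lin n u + lin n v = lin n (\<lambda>i. u i + v i)"
  by (simp add: lin_def sum.distrib[symmetric] Const_add[symmetric] distrib_right)

lemma lin_diff: "lin n u - lin n v = lin n (\<lambda>i. u i - v i)"
  by (simp add: lin_def sum_subtractf[symmetric] Const_diff[symmetric] left_diff_distrib)

lemma lin_Cmul: "Const c * lin n u = lin n (\<lambda>i. c * u i)"
  by (simp add: lin_def sum_distrib_left mult.assoc[symmetric] Const_mult)

lemma lin_sum: "(\<Sum>s\<in>S. lin n (f s)) = lin n (\<lambda>i. \<Sum>s\<in>S. f s i)"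
proof (induction S rule: infinite_finite_induct)
  case (infinite S) thus ?case by (simp add: lin_def)
next
  case empty thus ?case by (simp add: lin_def)
next
  case (insert x F) thus ?case by (simp add: lin_add)
qed

lemma ypoly_lin: assumes "j \<in> {1..n}" shows "ypoly A j = lin n (Yc A j)"
proof -
  have "ypoly A j = lin n (\<lambda>i. if i = j then 1 else 0) - Const (1/2) * lin n (\<lambda>i. if i < j then of_int (A i j) else 0)"
    using assms by (simp add: ypoly_def Var_lin[OF assms] alpha_lin)
  also have "\<dots> = lin n (\<lambda>i. (if i = j then 1 else 0) - 1/2 * (if i < j then of_int (A i j) else 0))"
    by (simp add: lin_Cmul lin_diff)
  also have "(\<lambda>i. (if i = j then 1 else 0) - 1/2 * (if i < j then of_int (A i j) else 0)) = Yc A j"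
    by (auto simp: Yc_def fun_eq_iff)
  finally show ?thesis .
qed

lemma ylin_lin: "ylin n A d = lin n (\<lambda>a. \<Sum>i\<in>{1..n}. d i * Yc A i a)"
proof -
  have "ylin n A d = (\<Sum>i\<in>{1..n}. lin n (\<lambda>a. d i * Yc A i a))"
    unfolding ylin_def
  proof (rule sum.cong[OF refl])
    fix i assume "i \<in> {1..n}"
    thus "Const (d i) * ypoly A i = lin n (\<lambda>a. d i * Yc A i a)" using ypoly_lin[of i n A] lin_Cmul by simp
  qed
  thus ?thesis by (simp add: lin_sum)
qed

lemma Yc_top: "i \<le> m \<Longrightarrow> Yc A i m = (if i = m then 1 else 0)"
  by (auto simp: Yc_def)

lemma ylin_ideal_zero:
  assumes "ylin n A d \<in> bott_ideal n A" "i \<in> {1..n}"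
  shows "d i = 0"
proof (rule ccontr)
  assume di: "d i \<noteq> 0"
  define Z where "Z = {k\<in>{1..n}. d k \<noteq> 0}"
  have Z: "finite Z" "Z \<noteq> {}" using di assms(2) by (auto simp: Z_def)
  define m where "m = Max Z"
  have m: "m \<in> {1..n}" "d m \<noteq> 0" using Max_in[OF Z] by (auto simp: m_def Z_def)
  have mx: "k \<in> {1..n} \<Longrightarrow> d k \<noteq> 0 \<Longrightarrow> k \<le> m" for k using Max_ge[OF Z(1)] by (auto simp: m_def Z_def)
  have "PhiOK n A (ylin n A d)" by (rule ideal_PhiOK[OF assms(1)])
  hence "Poly_Mapping.lookup (ylin n A d) (Poly_Mapping.single m 1) = 0" by (simp add: PhiOK_def)
  moreover have "Poly_Mapping.lookup (lin n (\<lambda>a. \<Sum>k\<in>{1..n}. d k * Yc A k a)) (Poly_Mapping.single m 1) = (\<Sum>k\<in>{1..n}. d k * Yc A k m)"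
    by (rule lookup_lin1) (rule m(1))
  ultimately have "(\<Sum>k\<in>{1..n}. d k * Yc A k m) = 0" by (simp add: ylin_lin)
  moreover have "(\<Sum>k\<in>{1..n}. d k * Yc A k m) = (\<Sum>k\<in>{1..n}. if k = m then d m else 0)"
  proof (rule sum.cong[OF refl])
    fix k assume k: "k \<in> {1..n}"
    show "d k * Yc A k m = (if k = m then d m else 0)"
    proof (cases "d k = 0")
      case True thus ?thesis by auto
    next
      case False thus ?thesis using mx[OF k] by (simp add: Yc_top)
    qed
  qed
  ultimately show False using m by simp
qed

lemma SB_add: "p \<in> SB A j \<Longrightarrow> q \<in> SB A j \<Longrightarrow> p + q \<in> SB A j"
proof -
  assume "p \<in> SB A j" "q \<in> SB A j"
  then obtain d e where "p = (\<Sum>i\<in>{1..<j}. Const (d i) * ypoly A i)" "q = (\<Sum>i\<in>{1..<j}. Const (e i) * ypoly A i)"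
    by (auto simp: SB_def)
  hence "p + q = (\<Sum>i\<in>{1..<j}. Const (d i + e i) * ypoly A i)"
    by (simp add: sum.distrib[symmetric] Const_add[symmetric] distrib_right)
  thus ?thesis by (auto simp: SB_def)
qed

lemma SB_Cmul: "p \<in> SB A j \<Longrightarrow> Const c * p \<in> SB A j"
proof -
  assume "p \<in> SB A j"
  then obtain d where "p = (\<Sum>i\<in>{1..<j}. Const (d i) * ypoly A i)" by (auto simp: SB_def)
  hence "Const c * p = (\<Sum>i\<in>{1..<j}. Const (c * d i) * ypoly A i)"
    by (simp add: sum_distrib_left mult.assoc[symmetric] Const_mult)
  thus ?thesis by (auto simp: SB_def)
qed

lemma SB_0: "0 \<in> SB A j"
  unfolding SB_def by (rule CollectI, rule exI[of _ "\<lambda>i. 0"]) simp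

lemma SB_sum: "(\<And>s. s \<in> S \<Longrightarrow> p s \<in> SB A j) \<Longrightarrow> (\<Sum>s\<in>S. Const (c s) * p s) \<in> SB A j"
  by (induction S rule: infinite_finite_induct) (auto intro: SB_add SB_Cmul SB_0)

lemma SB_mono: assumes "j \<le> j'" "p \<in> SB A j" shows "p \<in> SB A j'"
proof -
  obtain d where d: "p = (\<Sum>i\<in>{1..<j}. Const (d i) * ypoly A i)" using assms(2) by (auto simp: SB_def)
  have "(\<Sum>i\<in>{1..<j'}. Const (if i < j then d i else 0) * ypoly A i)
      = (\<Sum>i\<in>{1..<j}. Const (d i) * ypoly A i)"
    by (rule sum.mono_neutral_cong_right) (use assms(1) in auto)
  hence "p = (\<Sum>i\<in>{1..<j'}. Const (if i < j then d i else 0) * ypoly A i)" using d by simp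
  thus ?thesis unfolding SB_def by (intro CollectI exI)
qed

lemma ypoly_SB: assumes "i \<in> {1..<j}" shows "ypoly A i \<in> SB A j"
proof -
  have "(\<Sum>k\<in>{1..<j}. Const (if k = i then 1 else 0) * ypoly A k) = (\<Sum>k\<in>{1..<j}. if k = i then ypoly A k else 0)"
    by (rule sum.cong) auto
  also have "\<dots> = ypoly A i" using assms by (simp add: sum.delta)
  finally have "ypoly A i = (\<Sum>k\<in>{1..<j}. Const (if k = i then 1 else 0) * ypoly A k)" by simp
  thus ?thesis unfolding SB_def by (intro CollectI exI)
qed

lemma halfalpha: "Const (1/2) * alpha A i = (\<Sum>l\<in>{1..<i}. Const (of_int (A l i) / 2) * Var l)"
  by (simp add: alpha_def sum_distrib_left mult.assoc[symmetric] Const_mult)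

lemma Var_SB: "1 \<le> i \<Longrightarrow> i < j \<Longrightarrow> Var i \<in> SB A j"
proof (induction i arbitrary: j rule: less_induct)
  case (less i)
  have "Const (1/2) * alpha A i \<in> SB A j"
    unfolding halfalpha
  proof (rule SB_sum)
    fix l assume l: "l \<in> {1..<i}"
    have "Var l \<in> SB A i" using less.IH[of l i] l by auto
    thus "Var l \<in> SB A j" using SB_mono[of i j] less.prems by auto
  qed
  moreover have "ypoly A i \<in> SB A j" using less.prems by (intro ypoly_SB) auto
  moreover have "Var i = ypoly A i + Const (1/2) * alpha A i" by (simp add: ypoly_def)
  ultimately show ?case using SB_add[of "ypoly A i" A j "Const (1/2) * alpha A i"] by simp
qed

lemma gamma_SB: "Const (1/2) * alpha A j \<in> SB A j"
  unfolding halfalpha by (rule SB_sum) (auto intro: Var_SB)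

lemma lin_SB: "lin n u \<in> SB A (Suc n)"
  unfolding lin_def by (rule SB_sum) (auto intro: Var_SB)

lemma SB_ylin: assumes "p \<in> SB A (Suc n)" shows "\<exists>d. p = ylin n A d"
proof -
  obtain d where "p = (\<Sum>i\<in>{1..<Suc n}. Const (d i) * ypoly A i)" using assms by (auto simp: SB_def)
  hence "p = ylin n A d" by (simp add: ylin_def atLeastLessThanSuc_atLeastAtMost)
  thus ?thesis by blast
qed




definition qpoly :: "nat \<Rightarrow> (nat \<Rightarrow> nat \<Rightarrow> int) \<Rightarrow> (nat \<Rightarrow> nat \<Rightarrow> rat) \<Rightarrow> mpoly" where
  "qpoly n A S = (\<Sum>a\<in>{1..n}. \<Sum>b\<in>{1..n}. Const (S a b) * (ypoly A a * ypoly A b))"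

definition gfun :: "(nat \<Rightarrow> nat \<Rightarrow> int) \<Rightarrow> nat \<Rightarrow> nat \<Rightarrow> rat" where
  "gfun A j = (SOME d. Const (1/2) * alpha A j = (\<Sum>i\<in>{1..<j}. Const (d i) * ypoly A i))"

lemma gfun_rep: "Const (1/2) * alpha A j = (\<Sum>i\<in>{1..<j}. Const (gfun A j i) * ypoly A i)"
proof -
  have "\<exists>d. Const (1/2) * alpha A j = (\<Sum>i\<in>{1..<j}. Const (d i) * ypoly A i)"
    using gamma_SB[of A j] by (simp add: SB_def)
  thus ?thesis unfolding gfun_def by (rule someI_ex)
qed

lemma gamma_ylin: assumes "j \<in> {1..n}" shows "Const (1/2) * alpha A j = ylin n A (Gf (gfun A) j)"
proof -
  have "ylin n A (Gf (gfun A) j) = (\<Sum>i\<in>{1..<j}. Const (gfun A j i) * ypoly A i)"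
    unfolding ylin_def Gf_def by (rule sum.mono_neutral_cong_right) (use assms in auto)
  thus ?thesis by (simp add: gfun_rep)
qed

lemma ylin_delta: assumes "j \<in> {1..n}" shows "ylin n A (\<lambda>i. if i = j then 1 else 0) = ypoly A j"
proof -
  have "ylin n A (\<lambda>i. if i = j then 1 else 0) = (\<Sum>i\<in>{1..n}. if i = j then ypoly A i else 0)"
    unfolding ylin_def by (rule sum.cong) auto
  thus ?thesis using assms by (simp add: sum.delta)
qed

lemma ylin_sq: "ylin n A x * ylin n A x = (\<Sum>a\<in>{1..n}. \<Sum>b\<in>{1..n}. Const (x a * x b) * (ypoly A a * ypoly A b))"
  unfolding ylin_def sum_product by (simp add: Const_mult[symmetric] algebra_simps)

lemma qpoly_sq: "qpoly n A (\<lambda>a b. x a * x b - z a * z b) = ylin n A x * ylin n A x - ylin n A z * ylin n A z"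
  unfolding qpoly_def ylin_sq by (simp add: Const_diff[symmetric] left_diff_distrib sum_subtractf)

lemma qpoly_diff: "qpoly n A (\<lambda>a b. S a b - c * T a b) = qpoly n A S - Const c * qpoly n A T"
  unfolding qpoly_def by (simp add: Const_diff[symmetric] Const_mult[symmetric] left_diff_distrib sum_subtractf
      sum_distrib_left mult.assoc)

lemma Em_sq: "Em g j = (\<lambda>a b. (if a = j then 1 else 0) * (if b = j then 1 else 0) - Gf g j a * Gf g j b)"
  by (auto simp: Em_def fun_eq_iff)

lemma ypoly_sq_rel: "ypoly A j * ypoly A j - (Const (1/2) * alpha A j) * (Const (1/2) * alpha A j)
    = Var j * Var j - alpha A j * Var j"
proof -
  have two: "Const (1/2) * 2 = (1::mpoly)"
  proof -
    have e: "(2::mpoly) = Const 2" by (simp add: Const_def)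
    show ?thesis by (subst e) (simp add: Const_mult)
  qed
  have "ypoly A j * ypoly A j - (Const (1/2) * alpha A j) * (Const (1/2) * alpha A j)
      = Var j * Var j - (Const (1/2) * 2) * alpha A j * Var j"
    by (simp add: ypoly_def algebra_simps)
  thus ?thesis using two by simp
qed

lemma qpoly_Em: assumes "j \<in> {1..n}" shows "qpoly n A (Em (gfun A) j) \<in> bott_ideal n A"
proof -
  have "qpoly n A (Em (gfun A) j) = ylin n A (\<lambda>i. if i = j then 1 else 0) * ylin n A (\<lambda>i. if i = j then 1 else 0)
        - ylin n A (Gf (gfun A) j) * ylin n A (Gf (gfun A) j)"
    unfolding Em_sq by (rule qpoly_sq)
  also have "\<dots> = Var j * Var j - alpha A j * Var j"
    using assms by (simp add: ylin_delta gamma_ylin[symmetric] ypoly_sq_rel)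
  finally show ?thesis using rel_in_ideal[OF assms] by simp
qed

lemma ideal_diff: "p \<in> bott_ideal n A \<Longrightarrow> q \<in> bott_ideal n A \<Longrightarrow> p - q \<in> bott_ideal n A"
proof -
  interpret ideal "bott_ideal n A" "poly_ring n" by (rule ideal_bott)
  assume pq: "p \<in> bott_ideal n A" "q \<in> bott_ideal n A"
  have "p \<oplus>\<^bsub>poly_ring n\<^esub> (\<ominus>\<^bsub>poly_ring n\<^esub> q) \<in> bott_ideal n A" using pq by blast
  moreover have "q \<in> polys_in n" using pq a_subset by auto
  ultimately show ?thesis by (simp add: a_inv_poly)
qed

lemma ideal_lmult: "c \<in> polys_in n \<Longrightarrow> q \<in> bott_ideal n A \<Longrightarrow> c * q \<in> bott_ideal n A"
proof -
  interpret ideal "bott_ideal n A" "poly_ring n" by (rule ideal_bott)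
  assume "c \<in> polys_in n" "q \<in> bott_ideal n A"
  thus ?thesis using I_l_closed by simp
qed

lemma lookup_qpoly_ell:
  assumes a0: "a0 \<in> {1..n}" and t: "t \<in> {1..n}" and lt: "a0 < t"
  shows "ellf A a0 t (qpoly n A D) = (\<Sum>c\<in>{1..n}. \<Sum>d\<in>{1..n}. D c d *
     (Yc A c a0 * Yc A d t + Yc A c t * Yc A d a0 + of_int (A a0 t) * (Yc A c t * Yc A d t)))"
proof -
  have yy: "ypoly A c * ypoly A d = lin n (Yc A c) * lin n (Yc A d)" if "c \<in> {1..n}" "d \<in> {1..n}" for c d
    by (simp only: ypoly_lin[OF that(1)] ypoly_lin[OF that(2)])
  have l1: "Poly_Mapping.lookup (qpoly n A D) (mono2 a0 t) = (\<Sum>c\<in>{1..n}. \<Sum>d\<in>{1..n}. D c d * (Yc A c a0 * Yc A d t + Yc A c t * Yc A d a0))"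
    unfolding qpoly_def lookup_sum lookup_Const_mult
    by (intro sum.cong refl) (use a0 t lt in \<open>simp add: yy lookup_lin_mult\<close>)
  have l2: "Poly_Mapping.lookup (qpoly n A D) (mono2 t t) = (\<Sum>c\<in>{1..n}. \<Sum>d\<in>{1..n}. D c d * (Yc A c t * Yc A d t))"
    unfolding qpoly_def lookup_sum lookup_Const_mult
    by (intro sum.cong refl) (use t in \<open>simp add: yy lookup_lin_mult\<close>)
  show ?thesis unfolding ellf_def l1 l2
    by (simp add: sum_distrib_left sum.distrib[symmetric] algebra_simps)
qed




lemma Em_sym: "Em g j a b = Em g j b a"
  by (simp add: Em_def mult.commute conj_commute)

lemma qpoly_claim:
  "\<forall>S. (\<forall>a\<in>{1..n}. \<forall>b\<in>{1..n}. S a b = S b a) \<longrightarrow>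
       (\<forall>a\<in>{1..n}. \<forall>b\<in>{1..n}. (t < a \<or> t < b) \<longrightarrow> S a b = 0) \<longrightarrow>
       qpoly n B S \<in> bott_ideal n B \<longrightarrow> inspan {1..n} (gfun B) S"
proof (induction t)
  case 0
  show ?case
  proof (intro allI impI)
    fix S :: "nat \<Rightarrow> nat \<Rightarrow> rat"
    assume sup: "\<forall>a\<in>{1..n}. \<forall>b\<in>{1..n}. (0 < a \<or> 0 < b) \<longrightarrow> S a b = 0"
    show "inspan {1..n} (gfun B) S"
      by (rule inspan_cong[OF inspan_zero]) (use sup in auto)
  qed
next
  case (Suc t)
  let ?N = "{1..n::nat}" and ?g = "gfun B" and ?t = "Suc t"
  show ?case
  proof (intro allI impI)
    fix S :: "nat \<Rightarrow> nat \<Rightarrow> rat"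
    assume sym: "\<forall>a\<in>?N. \<forall>b\<in>?N. S a b = S b a"
      and sup: "\<forall>a\<in>?N. \<forall>b\<in>?N. (?t < a \<or> ?t < b) \<longrightarrow> S a b = 0"
      and Q: "qpoly n B S \<in> bott_ideal n B"
    show "inspan ?N ?g S"
    proof (cases "?t \<le> n")
      case False
      have "\<forall>a\<in>?N. \<forall>b\<in>?N. (t < a \<or> t < b) \<longrightarrow> S a b = 0" using False by auto
      thus ?thesis using Suc.IH sym Q by blast
    next
      case True
      have tN: "?t \<in> ?N" using True by auto
      define D where "D = (\<lambda>a b. S a b - S ?t ?t * Em ?g ?t a b)"
      have Dsym: "D a b = D b a" if "a \<in> ?N" "b \<in> ?N" for a b
        using sym that by (simp add: D_def Em_sym)
      have Dtt: "D ?t ?t = 0" by (simp add: D_def Em_def Gf_def)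
      have Dsup: "D a b = 0" if ab: "a \<in> ?N" "b \<in> ?N" "?t < a \<or> ?t < b" for a b
      proof -
        have "S a b = 0" using sup ab by auto
        moreover have "Em ?g ?t a b = 0" using ab(3) by (auto simp: Em_def Gf_def)
        ultimately show ?thesis by (simp add: D_def)
      qed
      have DQ: "qpoly n B D \<in> bott_ideal n B"
        unfolding D_def qpoly_diff
        by (intro ideal_diff Q ideal_lmult polys_in_Const qpoly_Em tN)
      have Dcol: "D a ?t = 0" if a: "a \<in> ?N" "a < ?t" for a
      proof (rule ccontr)
        assume nz: "D a ?t \<noteq> 0"
        define Z where "Z = {c\<in>?N. c < ?t \<and> D c ?t \<noteq> 0}"
        have Z: "finite Z" "Z \<noteq> {}" using a nz by (auto simp: Z_def)
        define a0 where "a0 = Max Z"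
        have a0: "a0 \<in> ?N" "a0 < ?t" "D a0 ?t \<noteq> 0" using Max_in[OF Z] by (auto simp: a0_def Z_def)
        have a0max: "c \<in> ?N \<Longrightarrow> c < ?t \<Longrightarrow> D c ?t \<noteq> 0 \<Longrightarrow> c \<le> a0" for c
          using Max_ge[OF Z(1)] by (auto simp: a0_def Z_def)
        have "PhiOK n B (qpoly n B D)" by (rule ideal_PhiOK[OF DQ])
        hence "ellf B a0 ?t (qpoly n B D) = 0" using a0 tN by (simp add: PhiOK_def)
        hence E: "(\<Sum>c\<in>?N. \<Sum>d\<in>?N. D c d *
            (Yc B c a0 * Yc B d ?t + Yc B c ?t * Yc B d a0 + of_int (B a0 ?t) * (Yc B c ?t * Yc B d ?t))) = 0"
          using lookup_qpoly_ell[OF a0(1) tN a0(2)] by simp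
        define X where "X = (\<lambda>c. D c ?t * Yc B c a0)"
        define Y where "Y = (\<lambda>d. D ?t d * Yc B d a0)"
        have trm: "D c d * (Yc B c a0 * Yc B d ?t + Yc B c ?t * Yc B d a0 + of_int (B a0 ?t) * (Yc B c ?t * Yc B d ?t))
            = (if d = ?t then X c else 0) + (if c = ?t then Y d else 0)" if cd: "c \<in> ?N" "d \<in> ?N" for c d
        proof (cases "D c d = 0")
          case True thus ?thesis by (auto simp: X_def Y_def)
        next
          case False
          have "c \<le> ?t" "d \<le> ?t" using Dsup[OF cd] False by force+
          hence yt: "Yc B c ?t = (if c = ?t then 1 else 0)" "Yc B d ?t = (if d = ?t then 1 else 0)"
            by (simp_all add: Yc_top)
          have "\<not> (c = ?t \<and> d = ?t)" using False Dtt by auto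
          thus ?thesis using yt by (auto simp: X_def Y_def)
        qed
        have "(\<Sum>c\<in>?N. \<Sum>d\<in>?N. D c d *
            (Yc B c a0 * Yc B d ?t + Yc B c ?t * Yc B d a0 + of_int (B a0 ?t) * (Yc B c ?t * Yc B d ?t)))
          = (\<Sum>c\<in>?N. \<Sum>d\<in>?N. (if d = ?t then X c else 0) + (if c = ?t then Y d else 0))"
          by (intro sum.cong refl) (simp add: trm)
        also have "\<dots> = (\<Sum>c\<in>?N. X c) + (\<Sum>d\<in>?N. Y d)"
        proof -
          have h: "(\<Sum>c\<in>?N. \<Sum>d\<in>?N. if c = ?t then Y d else 0) = (\<Sum>c\<in>?N. if c = ?t then (\<Sum>d\<in>?N. Y d) else 0)"
            by (rule sum.cong) auto
          have h2: "(\<Sum>c\<in>?N. \<Sum>d\<in>?N. if d = ?t then X c else 0) = (\<Sum>c\<in>?N. X c)"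
            by (rule sum.cong[OF refl]) (use tN in \<open>simp add: sum.delta\<close>)
          have h3: "(\<Sum>c\<in>?N. if c = ?t then (\<Sum>d\<in>?N. Y d) else 0) = (\<Sum>d\<in>?N. Y d)"
            using tN by (simp add: sum.delta)
          show ?thesis unfolding sum.distrib h h2 h3 ..
        qed
        also have "(\<Sum>c\<in>?N. X c) = (\<Sum>c\<in>?N. if c = a0 then D a0 ?t else 0)"
        proof (rule sum.cong[OF refl])
          fix c assume c: "c \<in> ?N"
          show "X c = (if c = a0 then D a0 ?t else 0)"
          proof (cases "D c ?t = 0")
            case True thus ?thesis by (auto simp: X_def)
          next
            case False
            have "c \<le> ?t" using Dsup[OF c tN] False by force
            moreover have "c \<noteq> ?t" using False Dtt by auto
            ultimately have "c \<le> a0" using a0max c False by simp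
            thus ?thesis by (simp add: X_def Yc_top Yc_def)
          qed
        qed
        also have "(\<Sum>d\<in>?N. Y d) = (\<Sum>d\<in>?N. if d = a0 then D a0 ?t else 0)"
        proof (rule sum.cong[OF refl])
          fix d assume d: "d \<in> ?N"
          have Ysym: "Y d = D d ?t * Yc B d a0" using Dsym[OF tN d] by (simp add: Y_def)
          show "Y d = (if d = a0 then D a0 ?t else 0)"
          proof (cases "D d ?t = 0")
            case True thus ?thesis using Ysym by auto
          next
            case False
            have "d \<le> ?t" using Dsup[OF d tN] False by force
            moreover have "d \<noteq> ?t" using False Dtt by auto
            ultimately have "d \<le> a0" using a0max d False by simp
            thus ?thesis using Ysym by (simp add: Yc_top Yc_def)
          qed
        qed
        finally have "D a0 ?t + D a0 ?t = 0" using E a0 by (simp add: sum.delta)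
        thus False using a0 by simp
      qed
      have Dsup2: "\<forall>a\<in>?N. \<forall>b\<in>?N. (t < a \<or> t < b) \<longrightarrow> D a b = 0"
      proof (intro ballI impI)
        fix a b assume ab: "a \<in> ?N" "b \<in> ?N" "t < a \<or> t < b"
        show "D a b = 0"
        proof (cases "?t < a \<or> ?t < b")
          case True thus ?thesis using Dsup ab by blast
        next
          case False
          hence le: "a \<le> ?t" "b \<le> ?t" by auto
          consider "a = ?t" "b = ?t" | "a = ?t" "b < ?t" | "b = ?t" "a < ?t" using ab(3) le by linarith
          thus ?thesis
          proof cases
            case 1 thus ?thesis using Dtt by simp
          next
            case 2 thus ?thesis using Dcol[OF ab(2)] Dsym[OF ab(1,2)] by simp
          next
            case 3 thus ?thesis using Dcol[OF ab(1)] by simp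
          qed
        qed
      qed
      have "\<forall>a\<in>?N. \<forall>b\<in>?N. D a b = D b a" using Dsym by blast
      hence iD: "inspan ?N ?g D" using Suc.IH Dsup2 DQ by blast
      have "inspan ?N ?g (\<lambda>a b. D a b + S ?t ?t * Em ?g ?t a b)"
        by (intro inspan_add iD inspan_smult inspan_Em tN) simp
      thus ?thesis by (rule inspan_cong) (simp add: D_def)
    qed
  qed
qed

lemma qpoly_inspan:
  assumes "\<forall>a\<in>{1..n}. \<forall>b\<in>{1..n}. S a b = S b a" "qpoly n B S \<in> bott_ideal n B"
  shows "inspan {1..n} (gfun B) S"
  using qpoly_claim[where n=n and B=B and t=n] assms by auto




lemma lookup_lin_keys: "m \<in> Poly_Mapping.keys (lin n u) \<Longrightarrow> \<exists>i\<in>{1..n}. m = Poly_Mapping.single i 1"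
proof -
  assume "m \<in> Poly_Mapping.keys (lin n u)"
  hence "(\<Sum>i\<in>{1..n}. (u i when Poly_Mapping.single i (1::nat) = m)) \<noteq> 0" by (simp add: in_keys_iff lookup_lin)
  then obtain i where "i \<in> {1..n}" "(u i when Poly_Mapping.single i (1::nat) = m) \<noteq> 0"
    by (meson sum.not_neutral_contains_not_neutral)
  thus ?thesis by (auto simp: when_def split: if_splits)
qed

lemma lin_homog: "lin n u \<in> homog 1"
  unfolding homog_def using lookup_lin_keys by (fastforce simp: mdeg_def[symmetric])

lemma lin_repr:
  assumes p: "p \<in> polys_in n" "p \<in> homog 1"
  shows "p = lin n (\<lambda>a. Poly_Mapping.lookup p (Poly_Mapping.single a 1))"
proof (rule poly_mapping_eqI)
  fix m
  let ?u = "\<lambda>a. Poly_Mapping.lookup p (Poly_Mapping.single a 1)"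
  have L: "Poly_Mapping.lookup (lin n ?u) m = (\<Sum>i\<in>{1..n}. (?u i when Poly_Mapping.single i (1::nat) = m))"
    by (simp add: lookup_lin)
  show "Poly_Mapping.lookup p m = Poly_Mapping.lookup (lin n ?u) m"
  proof (cases "m \<in> Poly_Mapping.keys p")
    case True
    have "mdeg m = 1" using p(2) True by (simp add: homog_def mdeg_def)
    then obtain k where k: "k \<in> Poly_Mapping.keys m" "m = Poly_Mapping.single k 1" using mdeg_one by blast
    have kn: "k \<in> {1..n}" using p(1) True k(1) unfolding polys_in_def by blast
    have "Poly_Mapping.lookup (lin n ?u) m = ?u k" unfolding k(2) by (rule lookup_lin1[OF kn])
    thus ?thesis using k by simp
  next
    case False
    hence z: "Poly_Mapping.lookup p m = 0" by (simp add: in_keys_iff)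
    have "(?u i when Poly_Mapping.single i (1::nat) = m) = 0" for i
      using z by (auto simp: when_def)
    thus ?thesis using z L by simp
  qed
qed

lemma ylin_polys: "ylin n A d \<in> polys_in n"
  by (simp add: ylin_lin polys_in_lin)

lemma ypoly_polys: assumes "i \<in> {1..n}" shows "ypoly A i \<in> polys_in n"
  using ypoly_lin[OF assms] polys_in_lin by metis

lemma ycls_deg1: "i \<in> {1..n} \<Longrightarrow> ycls n A i \<in> coh_deg n A 1"
  unfolding ycls_def coh_deg_def using ypoly_polys[of i n A] ypoly_lin[of i n A] lin_homog by auto

lemma deg1_ylin: "x \<in> coh_deg n B 1 \<Longrightarrow> \<exists>d. x = cls n B (ylin n B d)"
proof -
  assume "x \<in> coh_deg n B 1"
  then obtain p where p: "x = cls n B p" "p \<in> polys_in n" "p \<in> homog 1" by (auto simp: coh_deg_def)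
  have "p \<in> SB B (Suc n)" using lin_repr[OF p(2,3)] lin_SB by metis
  then obtain d where "p = ylin n B d" using SB_ylin by blast
  thus ?thesis using p by blast
qed

lemma ylin_comb: "(\<Sum>i\<in>S. Const (v i) * ylin n B (f i)) = ylin n B (\<lambda>k. \<Sum>i\<in>S. v i * f i k)"
proof (induction S rule: infinite_finite_induct)
  case (infinite S) thus ?case by (simp add: ylin_def)
next
  case empty thus ?case by (simp add: ylin_def)
next
  case (insert x F)
  have "Const (v x) * ylin n B (f x) + ylin n B (\<lambda>k. \<Sum>i\<in>F. v i * f i k)
      = ylin n B (\<lambda>k. v x * f x k + (\<Sum>i\<in>F. v i * f i k))"
    by (simp add: ylin_def sum_distrib_left sum.distrib[symmetric] mult.assoc[symmetric] Const_mult Const_add[symmetric] distrib_right)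
  thus ?case using insert by simp
qed

lemma ylin_zero: "ylin n B (\<lambda>k. 0) = 0"
  by (simp add: ylin_def)

lemma cnj_Em: assumes "finite N" "j \<in> N"
  shows "cnjM N M (Em g j) a b = M a j * M b j - (\<Sum>i\<in>N. M a i * Gf g j i) * (\<Sum>l\<in>N. M b l * Gf g j l)"
proof -
  have "cnjM N M (Em g j) a b = (\<Sum>i\<in>N. \<Sum>l\<in>N. (if i = j then (if l = j then M a i * M b l else 0) else 0)
       - (M a i * Gf g j i) * (M b l * Gf g j l))"
    unfolding cnjM_def Em_def by (intro sum.cong refl) (auto simp: algebra_simps)
  also have "\<dots> = (\<Sum>i\<in>N. \<Sum>l\<in>N. (if i = j then (if l = j then M a i * M b l else 0) else 0))
       - (\<Sum>i\<in>N. M a i * Gf g j i) * (\<Sum>l\<in>N. M b l * Gf g j l)"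
    by (simp add: sum_subtractf sum_product)
  also have "(\<Sum>i\<in>N. \<Sum>l\<in>N. (if i = j then (if l = j then M a i * M b l else 0) else 0)) = M a j * M b j"
  proof -
    have "(\<Sum>i\<in>N. \<Sum>l\<in>N. (if i = j then (if l = j then M a i * M b l else 0) else 0))
        = (\<Sum>i\<in>N. if i = j then (\<Sum>l\<in>N. if l = j then M a i * M b l else 0) else 0)"
      by (rule sum.cong) auto
    thus ?thesis using assms by (simp add: sum.delta)
  qed
  finally show ?thesis .
qed




theorem proposition4p1:
  fixes n :: nat and A B :: "nat \<Rightarrow> nat \<Rightarrow> int" and \<psi> :: "mpoly set \<Rightarrow> mpoly set"
  assumes "bott_matrix n A" and "bott_matrix n B"
    and "graded_ring_iso n A B \<psi>"
  shows "\<exists>(q :: nat \<Rightarrow> rat) (\<sigma> :: nat \<Rightarrow> nat). \<sigma> permutes {1..n} \<and>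
           (\<forall>j\<in>{1..n}. q j \<noteq> 0 \<and> \<psi> (ycls n A j) = cls n B (Const (q j) * ypoly B (\<sigma> j)))"
proof -
  have iso: "\<psi> \<in> ring_iso (coh n A) (coh n B)" and deg: "\<forall>d. \<psi> ` coh_deg n A d \<subseteq> coh_deg n B d"
    using assms(3) by (auto simp: graded_ring_iso_def)
  let ?N = "{1..n::nat}"
  have fin: "finite ?N" by simp
  have ex: "\<exists>d. \<psi> (ycls n A i) = cls n B (ylin n B d)" if "i \<in> ?N" for i
  proof -
    have "\<psi> (ycls n A i) \<in> coh_deg n B 1" using deg ycls_deg1[OF that, of A] by blast
    thus ?thesis by (rule deg1_ylin)
  qed
  define M where "M = (\<lambda>k i. (SOME d. \<psi> (ycls n A i) = cls n B (ylin n B d)) k)"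
  have col: "\<psi> (ycls n A i) = cls n B (ylin n B (\<lambda>k. M k i))" if "i \<in> ?N" for i
  proof -
    have "(\<lambda>k. M k i) = (SOME d. \<psi> (ycls n A i) = cls n B (ylin n B d))" by (simp add: M_def)
    thus ?thesis using someI_ex[OF ex[OF that]] by simp
  qed
  have psilin: "\<psi> (cls n A (ylin n A v)) = cls n B (ylin n B (\<lambda>k. \<Sum>i\<in>?N. v i * M k i))" for v
  proof -
    have "\<psi> (cls n A (\<Sum>i\<in>?N. Const (v i) * ypoly A i)) = cls n B (\<Sum>i\<in>?N. Const (v i) * ylin n B (\<lambda>k. M k i))"
      by (rule psi_lin_comb[OF iso]) (auto simp: ypoly_polys ylin_polys col[unfolded ycls_def])
    moreover have "ylin n A v = (\<Sum>i\<in>?N. Const (v i) * ypoly A i)" by (simp add: ylin_def)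
    ultimately show ?thesis by (simp add: ylin_comb)
  qed
  have ylin_cong: "ylin n B f = ylin n B f'" if "\<And>k. k \<in> ?N \<Longrightarrow> f k = f' k" for f f'
    unfolding ylin_def using that by (auto intro!: sum.cong)
  have inj: "injM ?N ?N M"
    unfolding injM_def
  proof (intro allI impI)
    fix v assume h: "\<forall>a\<in>?N. (\<Sum>i\<in>?N. M a i * v i) = 0"
    have "\<psi> (cls n A (ylin n A v)) = cls n B (ylin n B (\<lambda>k. 0))"
      unfolding psilin by (rule arg_cong[where f = "cls n B"], rule ylin_cong) (use h in \<open>simp add: mult.commute\<close>)
    also have "\<dots> = \<zero>\<^bsub>coh n B\<^esub>" by (simp add: ylin_zero cls_0)
    also have "\<dots> = \<psi> (cls n A 0)" by (simp add: cls_0 psi_zero[OF iso])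
    finally have "cls n A (ylin n A v) = cls n A 0"
      using inj_onD[OF psi_inj[OF iso]] by (simp add: cls_carrier ylin_polys polys_in_0)
    hence "ylin n A v \<in> bott_ideal n A" using cls_zero_iff[OF ylin_polys] by (simp add: cls_0)
    thus "\<forall>i\<in>?N. v i = 0" using ylin_ideal_zero by blast
  qed
  have span: "inspan ?N (gfun B) (cnjM ?N M (Em (gfun A) j))" if j: "j \<in> ?N" for j
  proof -
    define x where "x = (\<lambda>k. M k j)"
    define z where "z = (\<lambda>k. \<Sum>i\<in>?N. M k i * Gf (gfun A) j i)"
    define y where "y = ypoly A j"
    define \<gamma> where "\<gamma> = ylin n A (Gf (gfun A) j)"
    have yc: "y \<in> polys_in n" "\<gamma> \<in> polys_in n" using j by (simp_all add: y_def \<gamma>_def ypoly_polys ylin_polys)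
    have "y * y - \<gamma> * \<gamma> \<in> bott_ideal n A"
      using ypoly_sq_rel[of A j] rel_in_ideal[OF j, of A] gamma_ylin[OF j, of A] by (simp add: y_def \<gamma>_def)
    hence e: "cls n A (y * y) = cls n A (\<gamma> * \<gamma>)" using cls_eq yc by (simp add: polys_in_mult)
    have py: "\<psi> (cls n A y) = cls n B (ylin n B x)" using col[OF j] by (simp add: y_def x_def ycls_def)
    have pg: "\<psi> (cls n A \<gamma>) = cls n B (ylin n B z)"
      unfolding \<gamma>_def psilin z_def by (simp add: mult.commute)
    have "cls n B (ylin n B x * ylin n B x) = cls n B (ylin n B z * ylin n B z)"
    proof -
      have "cls n B (ylin n B x * ylin n B x) = \<psi> (cls n A (y * y))"
        using psi_cls_mult[OF iso yc(1) yc(1)] py by (simp add: cls_mult ylin_polys)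
      also have "\<dots> = \<psi> (cls n A (\<gamma> * \<gamma>))" by (simp add: e)
      also have "\<dots> = cls n B (ylin n B z * ylin n B z)"
        using psi_cls_mult[OF iso yc(2) yc(2)] pg by (simp add: cls_mult ylin_polys)
      finally show ?thesis .
    qed
    hence "ylin n B x * ylin n B x - ylin n B z * ylin n B z \<in> bott_ideal n B"
      using cls_eq by (simp add: polys_in_mult ylin_polys)
    hence "qpoly n B (\<lambda>a b. x a * x b - z a * z b) \<in> bott_ideal n B" by (simp add: qpoly_sq)
    hence "inspan ?N (gfun B) (\<lambda>a b. x a * x b - z a * z b)"
      by (intro qpoly_inspan) (auto simp: mult.commute)
    thus ?thesis by (rule inspan_cong) (simp only: cnj_Em[OF fin j] x_def z_def)
  qed
  have hyp: "hyp ?N (gfun A) ?N (gfun B) M" using span inj by (simp add: hyp_def)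
  have cr: "\<exists>k\<in>?N. M k i \<noteq> 0 \<and> (\<forall>b\<in>?N. b \<noteq> k \<longrightarrow> M b i = 0)" if "i \<in> ?N" for i
    by (rule core[OF fin fin hyp that])
  define \<sigma> where "\<sigma> = (\<lambda>i. if i \<in> ?N then (SOME k. k \<in> ?N \<and> M k i \<noteq> 0 \<and> (\<forall>b\<in>?N. b \<noteq> k \<longrightarrow> M b i = 0)) else i)"
  have sig: "\<sigma> i \<in> ?N \<and> M (\<sigma> i) i \<noteq> 0 \<and> (\<forall>b\<in>?N. b \<noteq> \<sigma> i \<longrightarrow> M b i = 0)" if "i \<in> ?N" for i
  proof -
    have "\<exists>k. k \<in> ?N \<and> M k i \<noteq> 0 \<and> (\<forall>b\<in>?N. b \<noteq> k \<longrightarrow> M b i = 0)" using cr[OF that] by blast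
    from someI_ex[OF this] show ?thesis using that by (simp add: \<sigma>_def)
  qed
  have injs: "inj_on \<sigma> ?N"
  proof (rule inj_onI, rule ccontr)
    fix i i' assume ii: "i \<in> ?N" "i' \<in> ?N" "\<sigma> i = \<sigma> i'" "i \<noteq> i'"
    define k where "k = \<sigma> i"
    define v where "v = (\<lambda>l. if l = i then M k i' else if l = i' then - M k i else (0::rat))"
    have "(\<Sum>l\<in>?N. M a l * v l) = 0" if a: "a \<in> ?N" for a
    proof -
      have "(\<Sum>l\<in>?N. M a l * v l) = (\<Sum>l\<in>?N. (if l = i then M a i * M k i' else 0) + (if l = i' then - (M a i' * M k i) else 0))"
        by (rule sum.cong) (use ii in \<open>auto simp: v_def\<close>)
      also have "\<dots> = M a i * M k i' - M a i' * M k i" using ii by (simp add: sum.distrib sum.delta)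
      also have "\<dots> = 0"
      proof (cases "a = k")
        case True thus ?thesis by simp
      next
        case False
        hence "M a i = 0" "M a i' = 0" using sig[OF ii(1)] sig[OF ii(2)] a ii(3) by (auto simp: k_def)
        thus ?thesis by simp
      qed
      finally show ?thesis .
    qed
    from injMD[OF inj this ii(1)] have "M k i' = 0" by (simp add: v_def)
    thus False using sig[OF ii(2)] ii(3) by (simp add: k_def)
  qed
  have "\<sigma> ` ?N \<subseteq> ?N" using sig by auto
  hence "\<sigma> ` ?N = ?N" using endo_inj_surj[OF fin _ injs] by blast
  hence "bij_betw \<sigma> ?N ?N" using injs by (simp add: bij_betw_def)
  hence perm: "\<sigma> permutes ?N"
  proof (rule bij_imp_permutes)
    fix x assume "x \<notin> ?N" thus "\<sigma> x = x" unfolding \<sigma>_def by (rule if_not_P)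
  qed
  have main: "M (\<sigma> j) j \<noteq> 0 \<and> \<psi> (ycls n A j) = cls n B (Const (M (\<sigma> j) j) * ypoly B (\<sigma> j))" if j: "j \<in> ?N" for j
  proof -
    have "ylin n B (\<lambda>k. M k j) = (\<Sum>b\<in>?N. if b = \<sigma> j then Const (M (\<sigma> j) j) * ypoly B (\<sigma> j) else 0)"
      unfolding ylin_def by (rule sum.cong) (use sig[OF j] in auto)
    also have "\<dots> = Const (M (\<sigma> j) j) * ypoly B (\<sigma> j)" using sig[OF j] by (simp add: sum.delta)
    finally show ?thesis using col[OF j] sig[OF j] by simp
  qed
  show ?thesis
    by (rule exI[of _ "\<lambda>j. M (\<sigma> j) j"], rule exI[of _ \<sigma>]) (use perm main in blast)
qed


end
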